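(* Assume that for all $i,j\in I$ the map $u\mapsto\lambda_{ij}(u)$ is continuous on $U$, and that $f\colon I\times U\to\mathbb R$ is continuous. Then for every $w\in\mathrm C(\Delta_e)$ we have $\mathcal Gw\in\mathrm C(\Delta_e)$.
   Context: $I$, $O$ finite sets; $h\colon I\to O$ surjective and non-constant. $U$ compact metric space. For $u\in U$, $\Lambda(u)=(\lambda_{ij}(u))$ real with $\lambda_{ij}(u)\ge0$ for $i\ne j$ and zero row sums. $\mathbf f(u)=(f(i,u))_{i\in I}$ column vector; $\beta>0$. Measures on $I$ are row vectors in $\mathbb R^{|I|}$; $\Delta_a$ ($a\in O$) the probability measures supported in $h^{-1}(a)$; $\Delta_e=\bigcup_a\Delta_a$ (topology from $\mathbb R^{|I|}$); $\mathrm C(\Delta_e)$ the continuous real functions on $\Delta_e$; $\mathbb 1_{h^{-1}(a)}$ the column indicator of $h^{-1}(a)$. $F$: for $\nu\in\Delta_a$, $F_j(\nu,u)=[\nu\Lambda(u)]_j-(\nu\Lambda(u)\mathbb 1_{h^{-1}(a)})\nu_j$ for $j\in h^{-1}(a)$, $0$ otherwise. $H_b[\mu]$ ($b\in O$, $\mu\in\mathbb R^{|I|}$): $0$ off $h^{-1}(b)$, $\mu(i)/(\mu\mathbb 1_{h^{-1}(b)})$ on $h^{-1}(b)$ if $\mu\mathbb 1_{h^{-1}(b)}\ne0$, a fixed $\nu_b\in\Delta_b$ otherwise. For $\rho\in\Delta_a$: $r(\rho,u)=-\rho\Lambda(u)\mathbb 1_{h^{-1}(a)}$; $R(\rho,u;D)=\sum_b\mathbb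 1_D(H_b[\rho\Lambda(u)])q(\rho,u,b)$, $q(\rho,u,b)=\frac{\rho\Lambda(u)\mathbb 1_{h^{-1}(b)}}{-\rho\Lambda(u)\mathbb 1_{h^{-1}(a)}}\mathbb 1_{b\ne a}$ if the denominator is nonzero, else $q_a(b)$ ($q_a$ a fixed probability on $O\setminus\{a\}$). $L(\rho,s,u,w)=s[\rho\mathbf f(u)+r(\rho,u)\int_{\Delta_e}w(p)R(\rho,u;dp)]$. $A$ is the set of measurable maps $\alpha\colon[0,\infty)\to U$. For $\rho\in\Delta_a$, $\phi^\alpha_\rho$ solves $z'(t)=F(z(t),\alpha(t))$, $z(0)=\rho$ (it stays in $\Delta_a$), and $\chi^\alpha_\rho(t)=\exp\{-\int_0^tr(\phi^\alpha_\rho(s),\alpha(s))ds\}$. For bounded Borel $w$ on $\Delta_e$: $\mathcal Gw(\nu)=\inf_{\alpha\in A}\int_0^\infty e^{-\beta t}L(\phi^\alpha_\nu(t),\chi^\alpha_\nu(t),\alpha(t),w)\,dt$. *)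

theory Defs
  imports "HOL-Analysis.Analysis"
begin

text \<open>Measures on I are row vectors in real^'i; Lambda u is a real^'i^'i matrix with
  entries Lambda u $ i $ j = lambda_ij(u); nu v* Lambda u is the row vector nu Lambda(u).\<close>

definition Delta :: "('i::finite \<Rightarrow> 'o) \<Rightarrow> 'o \<Rightarrow> (real^'i) set" where
  "Delta h a = {\<nu>. (\<forall>i. 0 \<le> \<nu>$i) \<and> (\<Sum>i\<in>UNIV. \<nu>$i) = 1 \<and> (\<forall>i. h i \<noteq> a \<longrightarrow> \<nu>$i = 0)}"

definition Delta_e :: "('i::finite \<Rightarrow> 'o) \<Rightarrow> (real^'i) set" where
  "Delta_e h = (\<Union>a. Delta h a)"

definition blocksum :: "('i::finite \<Rightarrow> 'o) \<Rightarrow> 'o \<Rightarrow> real^'i \<Rightarrow> real" where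
  "blocksum h a \<mu> = (\<Sum>i | h i = a. \<mu>$i)"

text \<open>the (unique) a with nu in Delta_a, for nu in Delta_e\<close>
definition blk :: "('i::finite \<Rightarrow> 'o) \<Rightarrow> real^'i \<Rightarrow> 'o" where
  "blk h \<nu> = (THE a. \<nu> \<in> Delta h a)"

definition Fv :: "('i::finite \<Rightarrow> 'o) \<Rightarrow> ('u \<Rightarrow> real^'i^'i) \<Rightarrow> real^'i \<Rightarrow> 'u \<Rightarrow> real^'i" where
  "Fv h \<Lambda> \<nu> u = (\<chi> j. if h j = blk h \<nu>
      then (\<nu> v* \<Lambda> u)$j - blocksum h (blk h \<nu>) (\<nu> v* \<Lambda> u) * \<nu>$j else 0)"

definition Hb :: "('i::finite \<Rightarrow> 'o) \<Rightarrow> ('o \<Rightarrow> real^'i) \<Rightarrow> 'o \<Rightarrow> real^'i \<Rightarrow> real^'i" where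
  "Hb h nu0 b \<mu> = (if blocksum h b \<mu> \<noteq> 0
      then (\<chi> i. if h i = b then \<mu>$i / blocksum h b \<mu> else 0) else nu0 b)"

definition rr :: "('i::finite \<Rightarrow> 'o) \<Rightarrow> ('u \<Rightarrow> real^'i^'i) \<Rightarrow> real^'i \<Rightarrow> 'u \<Rightarrow> real" where
  "rr h \<Lambda> \<rho> u = - blocksum h (blk h \<rho>) (\<rho> v* \<Lambda> u)"

definition qq :: "('i::finite \<Rightarrow> 'o) \<Rightarrow> ('u \<Rightarrow> real^'i^'i) \<Rightarrow> ('o \<Rightarrow> 'o \<Rightarrow> real)
    \<Rightarrow> real^'i \<Rightarrow> 'u \<Rightarrow> 'o \<Rightarrow> real" where
  "qq h \<Lambda> qd \<rho> u b = (let a = blk h \<rho>; d = - blocksum h a (\<rho> v* \<Lambda> u) in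
      if d \<noteq> 0 then (if b \<noteq> a then blocksum h b (\<rho> v* \<Lambda> u) / d else 0) else qd a b)"

text \<open>integral of w against the discrete measure R(rho,u;.) = sum_b q(rho,u,b) delta_{H_b[rho Lambda(u)]}\<close>
definition intR :: "('i::finite \<Rightarrow> 'o::finite) \<Rightarrow> ('u \<Rightarrow> real^'i^'i) \<Rightarrow> ('o \<Rightarrow> real^'i)
    \<Rightarrow> ('o \<Rightarrow> 'o \<Rightarrow> real) \<Rightarrow> real^'i \<Rightarrow> 'u \<Rightarrow> (real^'i \<Rightarrow> real) \<Rightarrow> real" where
  "intR h \<Lambda> nu0 qd \<rho> u w = (\<Sum>b\<in>UNIV. w (Hb h nu0 b (\<rho> v* \<Lambda> u)) * qq h \<Lambda> qd \<rho> u b)"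

definition LL :: "('i::finite \<Rightarrow> 'o::finite) \<Rightarrow> ('u \<Rightarrow> real^'i^'i) \<Rightarrow> ('i \<Rightarrow> 'u \<Rightarrow> real)
    \<Rightarrow> ('o \<Rightarrow> real^'i) \<Rightarrow> ('o \<Rightarrow> 'o \<Rightarrow> real)
    \<Rightarrow> real^'i \<Rightarrow> real \<Rightarrow> 'u \<Rightarrow> (real^'i \<Rightarrow> real) \<Rightarrow> real" where
  "LL h \<Lambda> f nu0 qd \<rho> s u w =
     s * ((\<Sum>i\<in>UNIV. \<rho>$i * f i u) + rr h \<Lambda> \<rho> u * intR h \<Lambda> nu0 qd \<rho> u w)"

definition Ctrl :: "'u::metric_space set \<Rightarrow> (real \<Rightarrow> 'u) set" where
  "Ctrl U = {\<alpha>. (\<forall>t\<ge>0. \<alpha> t \<in> U) \<and> \<alpha> \<in> measurable (restrict_space lebesgue {0..}) borel}"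

text \<open>phi: the solution (in the Caratheodory/integral sense) of z' = F(z,alpha), z(0)=rho,
  staying in Delta_a; for t<0 it is normalised to rho.\<close>
definition phi :: "('i::finite \<Rightarrow> 'o) \<Rightarrow> ('u \<Rightarrow> real^'i^'i) \<Rightarrow> (real \<Rightarrow> 'u) \<Rightarrow> real^'i
    \<Rightarrow> real \<Rightarrow> real^'i" where
  "phi h \<Lambda> \<alpha> \<rho> = (THE z. (\<forall>t<0. z t = \<rho>) \<and>
     (\<forall>t\<ge>0. z t \<in> Delta h (blk h \<rho>)
        \<and> (\<lambda>s. Fv h \<Lambda> (z s) (\<alpha> s)) integrable_on {0..t}
        \<and> z t = \<rho> + integral {0..t} (\<lambda>s. Fv h \<Lambda> (z s) (\<alpha> s))))"

definition chi :: "('i::finite \<Rightarrow> 'o) \<Rightarrow> ('u \<Rightarrow> real^'i^'i) \<Rightarrow> (real \<Rightarrow> 'u) \<Rightarrow> real^'i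
    \<Rightarrow> real \<Rightarrow> real" where
  "chi h \<Lambda> \<alpha> \<rho> t = exp (- integral {0..t} (\<lambda>s. rr h \<Lambda> (phi h \<Lambda> \<alpha> \<rho> s) (\<alpha> s)))"

definition GG :: "('i::finite \<Rightarrow> 'o::finite) \<Rightarrow> 'u::metric_space set \<Rightarrow> ('u \<Rightarrow> real^'i^'i)
    \<Rightarrow> ('i \<Rightarrow> 'u \<Rightarrow> real) \<Rightarrow> real \<Rightarrow> ('o \<Rightarrow> real^'i) \<Rightarrow> ('o \<Rightarrow> 'o \<Rightarrow> real)
    \<Rightarrow> (real^'i \<Rightarrow> real) \<Rightarrow> real^'i \<Rightarrow> real" where
  "GG h U \<Lambda> f \<beta> nu0 qd w \<nu> = (INF \<alpha>\<in>Ctrl U.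
     (LINT t:{0..}|lebesgue. exp (- \<beta> * t) *
        LL h \<Lambda> f nu0 qd (phi h \<Lambda> \<alpha> \<nu> t) (chi h \<Lambda> \<alpha> \<nu> t) (\<alpha> t) w))"

end

theory Submission
  imports Defs
begin


lemma gronwall:
  fixes d :: "real \<Rightarrow> real"
  assumes cont: "continuous_on {0..T} d" and K: "K \<ge> 0"
    and le: "\<And>t. t \<in> {0..T} \<Longrightarrow> d t \<le> \<delta> + K * integral {0..t} d"
    and t: "t \<in> {0..T}"
  shows "d t \<le> \<delta> * exp (K * t)"
proof -
  define g where "g x = exp (- K * x) * (\<delta> + K * integral {0..x} d)" for x
  have ct: "continuous_on {0..t} d" using cont t by (auto intro: continuous_on_subset)
  have "g t \<le> g 0"
  proof (rule DERIV_nonpos_imp_decreasing_open[of 0 t g])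
    show "0 \<le> t" using t by auto
    show "continuous_on {0..t} g"
      unfolding g_def
      by (intro continuous_intros indefinite_integral_continuous_1 integrable_continuous_real ct)
    fix x assume x: "0 < x" "x < t"
    have D: "((\<lambda>x. integral {0..x} d) has_real_derivative d x) (at x within {0..t})"
      using x by (intro integral_has_real_derivative ct) auto
    have D2: "((\<lambda>x. integral {0..x} d) has_real_derivative d x) (at x)"
      using D x by (simp add: at_within_Icc_at)
    have "(g has_real_derivative (- K * exp (- K * x) * (\<delta> + K * integral {0..x} d) + exp (- K * x) * (K * d x))) (at x)"
      unfolding g_def by (auto intro!: derivative_eq_intros D2)
    moreover have "- K * exp (- K * x) * (\<delta> + K * integral {0..x} d) + exp (- K * x) * (K * d x)
       = K * exp (- K * x) * (d x - (\<delta> + K * integral {0..x} d))" by (simp add: algebra_simps)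
    moreover have "K * exp (- K * x) * (d x - (\<delta> + K * integral {0..x} d)) \<le> 0"
      using le[of x] x t K by (intro mult_nonneg_nonpos) auto
    ultimately show "\<exists>y. (g has_real_derivative y) (at x) \<and> y \<le> 0" by auto
  qed
  then have "exp (- K * t) * (\<delta> + K * integral {0..t} d) \<le> \<delta>" by (simp add: g_def)
  then have "\<delta> + K * integral {0..t} d \<le> \<delta> * exp (K * t)"
    by (simp add: exp_minus field_simps)
  with le[OF t] show ?thesis by linarith
qed

lemma gronwall0:
  fixes d :: "real \<Rightarrow> real"
  assumes cont: "continuous_on {0..T} d" and K: "K \<ge> 0"
    and le: "\<And>t. t \<in> {0..T} \<Longrightarrow> d t \<le> K * integral {0..t} d"
    and t: "t \<in> {0..T}"
  shows "d t \<le> 0"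
  using gronwall[OF cont K, of 0 t] le t by auto


lemma int_bounded_meas:
  fixes F :: "real \<Rightarrow> 'a::euclidean_space"
  assumes "F \<in> borel_measurable (lebesgue_on {0..})" "\<And>s. s \<ge> 0 \<Longrightarrow> norm (F s) \<le> M"
  shows "F integrable_on {0..t}"
proof (rule measurable_bounded_by_integrable_imp_integrable[where g="\<lambda>_. M"])
  show "F \<in> borel_measurable (lebesgue_on {0..t})"
    by (rule measurable_restrict_mono[OF assms(1)]) auto
qed (use assms(2) in auto)

lemma integral_lipschitz:
  fixes F :: "real \<Rightarrow> 'a::euclidean_space"
  assumes int: "\<And>t. t \<ge> 0 \<Longrightarrow> F integrable_on {0..t}" and bnd: "\<And>s. s \<ge> 0 \<Longrightarrow> norm (F s) \<le> M"
    and st: "0 \<le> s" "s \<le> t"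
  shows "norm (integral {0..t} F - integral {0..s} F) \<le> M * (t - s)"
proof -
  have it: "F integrable_on {0..t}" using int st by auto
  have "integral {0..s} F + integral {s..t} F = integral {0..t} F"
    using it st by (intro Henstock_Kurzweil_Integration.integral_combine) auto
  then have "integral {0..t} F - integral {0..s} F = integral {s..t} F" by (simp add: algebra_simps)
  also have "norm \<dots> \<le> integral {s..t} (\<lambda>_. M)"
    using st int[of t] bnd
    by (intro integral_norm_bound_integral integrable_on_subinterval[OF it]) auto
  also have "\<dots> = M * (t - s)" using st by simp
  finally show ?thesis .
qed

lemma integral_cont:
  fixes F :: "real \<Rightarrow> 'a::euclidean_space"
  assumes int: "\<And>t. t \<ge> 0 \<Longrightarrow> F integrable_on {0..t}" and bnd: "\<And>s. s \<ge> 0 \<Longrightarrow> norm (F s) \<le> M"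
  shows "continuous_on {0..} (\<lambda>t. integral {0..t} F)"
proof -
  have M: "M \<ge> 0" using bnd[of 0] norm_ge_zero[of "F 0"] by linarith
  have "M-lipschitz_on {0..} (\<lambda>t. integral {0..t} F)"
  proof (rule lipschitz_onI)
    fix x y :: real assume xy: "x \<in> {0..}" "y \<in> {0..}"
    show "dist (integral {0..x} F) (integral {0..y} F) \<le> M * dist x y"
    proof (cases "y \<le> x")
      case True thus ?thesis using integral_lipschitz[OF int bnd, of y x] xy
        by (simp add: dist_norm dist_real_def)
    next
      case False thus ?thesis using integral_lipschitz[OF int bnd, of x y] xy
        by (simp add: dist_norm dist_real_def norm_minus_commute)
    qed
  qed (rule M)
  thus ?thesis by (rule lipschitz_on_continuous_on)
qed

lemma power_has_integral:
  fixes t :: real assumes "0 \<le> t"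
  shows "((\<lambda>s. s ^ n) has_integral t ^ Suc n / Suc n) {0..t}"
proof -
  have "((\<lambda>s. s ^ n) has_integral ((\<lambda>s. s ^ Suc n / Suc n) t - (\<lambda>s. s ^ Suc n / Suc n) 0)) {0..t}"
    apply (rule fundamental_theorem_of_calculus)
    using assms apply simp
    apply (auto intro!: derivative_eq_intros simp: has_real_derivative_iff_has_vector_derivative[symmetric])
    apply (case_tac n)
     apply (auto simp: field_simps)
    done
  thus ?thesis by simp
qed

primrec picard :: "('a::euclidean_space \<Rightarrow> real \<Rightarrow> 'a) \<Rightarrow> 'a \<Rightarrow> nat \<Rightarrow> real \<Rightarrow> 'a" where
  "picard G x0 0 = (\<lambda>t. x0)"
| "picard G x0 (Suc n) = (\<lambda>t. x0 + integral {0..t} (\<lambda>s. G (picard G x0 n s) s))"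

lemma picard_exists:
  fixes G :: "'a::euclidean_space \<Rightarrow> real \<Rightarrow> 'a"
  assumes bnd: "\<And>x s. s \<ge> 0 \<Longrightarrow> norm (G x s) \<le> M"
    and lip: "\<And>x y s. s \<ge> 0 \<Longrightarrow> norm (G x s - G y s) \<le> K * norm (x - y)"
    and K: "K > 0"
    and meas: "\<And>z. continuous_on {0..} z \<Longrightarrow> (\<lambda>s. G (z s) s) \<in> borel_measurable (lebesgue_on {0..})"
  shows "\<exists>z. continuous_on {0..} z \<and> (\<forall>t\<ge>0. (\<lambda>s. G (z s) s) integrable_on {0..t}
           \<and> z t = x0 + integral {0..t} (\<lambda>s. G (z s) s))"
proof -
  define P where "P = picard G x0"
  have M: "M \<ge> 0" using bnd[of 0 "x0"] norm_ge_zero[of "G x0 0"] by linarith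
  have integ: "\<And>z t. continuous_on {0..} z \<Longrightarrow> (\<lambda>s. G (z s) s) integrable_on {0..t}"
    by (rule int_bounded_meas[OF meas bnd])
  have contP: "continuous_on {0..} (P n)" for n
  proof (induction n)
    case 0 thus ?case by (simp add: P_def)
  next
    case (Suc n)
    show ?case unfolding P_def picard.simps
      by (intro continuous_intros integral_cont[where M=M] integ Suc[unfolded P_def] bnd)
  qed
  have est: "\<And>t. t \<ge> 0 \<Longrightarrow> norm (P (Suc n) t - P n t) \<le> M * K ^ n * t ^ Suc n / fact (Suc n)" for n
  proof (induction n)
    case 0
    have "norm (integral {0..t} (\<lambda>s. G x0 s)) \<le> integral {0..t} (\<lambda>_. M)"
      using bnd integ[of "\<lambda>_. x0"] by (intro integral_norm_bound_integral) auto
    thus ?case using 0 by (simp add: P_def mult.commute)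
  next
    case (Suc n t)
    have i1: "(\<lambda>s. G (P (Suc n) s) s) integrable_on {0..t}" "(\<lambda>s. G (P n s) s) integrable_on {0..t}"
      using integ contP by auto
    have "P (Suc (Suc n)) t - P (Suc n) t = integral {0..t} (\<lambda>s. G (P (Suc n) s) s - G (P n s) s)"
      using i1 by (simp add: P_def integral_diff)
    also have "norm \<dots> \<le> integral {0..t} (\<lambda>s. K * (M * K ^ n * s ^ Suc n / fact (Suc n)))"
    proof (rule integral_norm_bound_integral)
      show "(\<lambda>s. G (P (Suc n) s) s - G (P n s) s) integrable_on {0..t}" using i1 by (rule integrable_diff)
      show "(\<lambda>s. K * (M * K ^ n * s ^ Suc n / fact (Suc n))) integrable_on {0..t}"
        by (intro integrable_continuous_real continuous_intros) auto
      fix s assume s: "s \<in> {0..t}"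
      have "norm (G (P (Suc n) s) s - G (P n s) s) \<le> K * norm (P (Suc n) s - P n s)"
        using s by (intro lip) auto
      also have "\<dots> \<le> K * (M * K ^ n * s ^ Suc n / fact (Suc n))"
        using Suc.IH[of s] s K by (intro mult_left_mono) auto
      finally show "norm (G (P (Suc n) s) s - G (P n s) s) \<le> K * (M * K ^ n * s ^ Suc n / fact (Suc n))" .
    qed
    also have "\<dots> = M * K ^ Suc n * t ^ Suc (Suc n) / fact (Suc (Suc n))"
    proof -
      have "((\<lambda>s. (K * M * K ^ n / fact (Suc n)) * s ^ Suc n) has_integral
              (K * M * K ^ n / fact (Suc n)) * (t ^ Suc (Suc n) / Suc (Suc n))) {0..t}"
        using Suc.prems by (intro has_integral_mult_right power_has_integral)
      moreover have "(\<lambda>s. K * (M * K ^ n * s ^ Suc n / fact (Suc n))) = (\<lambda>s. (K * M * K ^ n / fact (Suc n)) * s ^ Suc n)"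
        by (rule ext) (simp add: field_simps)
      ultimately have "integral {0..t} (\<lambda>s. K * (M * K ^ n * s ^ Suc n / fact (Suc n))) =
          (K * M * K ^ n / fact (Suc n)) * (t ^ Suc (Suc n) / Suc (Suc n))"
        by (metis integral_unique)
      also have "\<dots> = M * K ^ Suc n * t ^ Suc (Suc n) / fact (Suc (Suc n))"
        by (simp add: field_simps)
      finally show ?thesis .
    qed
    finally show ?case .
  qed
  have summ: "summable (\<lambda>n. M * K ^ n * t ^ Suc n / fact (Suc n))" if t: "t \<ge> 0" for t
  proof -
    have "summable (\<lambda>n. (K * t) ^ n /\<^sub>R fact n)" by (rule summable_exp_generic)
    then have "summable (\<lambda>n. (K * t) ^ (n + 1) /\<^sub>R fact (n + 1))"
      by (rule summable_ignore_initial_segment)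
    then have "summable (\<lambda>n. (K * t) ^ Suc n /\<^sub>R fact (Suc n))" by simp
    then have "summable (\<lambda>n. (M / K) * ((K * t) ^ Suc n /\<^sub>R fact (Suc n)))"
      by (rule summable_mult)
    moreover have "(M / K) * ((K * t) ^ Suc n /\<^sub>R fact (Suc n)) = M * K ^ n * t ^ Suc n / fact (Suc n)" for n
      using K by (simp add: field_simps power_mult_distrib)
    ultimately show ?thesis by simp
  qed
  define z where "z t = lim (\<lambda>n. P n t)" for t
  have conv: "(\<lambda>n. P n t) \<longlonglongrightarrow> z t" if t: "t \<ge> 0" for t
  proof -
    have "summable (\<lambda>n. P (Suc n) t - P n t)"
      by (rule summable_comparison_test'[OF summ[OF t]]) (use est t in auto)
    then have "(\<lambda>n. \<Sum>i<n. P (Suc i) t - P i t) \<longlonglongrightarrow> suminf (\<lambda>n. P (Suc n) t - P n t)"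
      by (rule summable_LIMSEQ)
    then have "(\<lambda>n. P n t - P 0 t) \<longlonglongrightarrow> suminf (\<lambda>n. P (Suc n) t - P n t)"
      using sum_lessThan_telescope[of "\<lambda>i. P i t"] by simp
    then have "(\<lambda>n. P n t - P 0 t + P 0 t) \<longlonglongrightarrow> suminf (\<lambda>n. P (Suc n) t - P n t) + P 0 t"
      by (intro tendsto_intros)
    then have "convergent (\<lambda>n. P n t)" by (auto intro: convergentI)
    thus ?thesis unfolding z_def by (simp add: convergent_LIMSEQ_iff)
  qed
  have eqn: "(\<lambda>s. G (z s) s) integrable_on {0..t} \<and> z t = x0 + integral {0..t} (\<lambda>s. G (z s) s)"
    if t: "t \<ge> 0" for t
  proof -
    have convG: "(\<lambda>k. G (P k s) s) \<longlonglongrightarrow> G (z s) s" if s: "s \<in> {0..t}" for s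
    proof -
      have c: "(\<lambda>k. P k s - z s) \<longlonglongrightarrow> 0" using conv[of s] s by (intro LIM_zero) auto
      have l0: "(\<lambda>k. K * norm (P k s - z s)) \<longlonglongrightarrow> 0"
        by (rule tendsto_mult_right_zero[OF tendsto_norm_zero[OF c]])
      have ev: "eventually (\<lambda>k. norm (G (P k s) s - G (z s) s) \<le> K * norm (P k s - z s)) sequentially"
        using lip[of s] s by (intro always_eventually allI) auto
      have "(\<lambda>k. G (P k s) s - G (z s) s) \<longlonglongrightarrow> 0"
        by (rule Lim_null_comparison[OF ev l0])
      thus ?thesis by (rule LIM_zero_cancel)
    qed
    have dc: "(\<lambda>s. G (z s) s) integrable_on {0..t}"
        "(\<lambda>k. integral {0..t} (\<lambda>s. G (P k s) s)) \<longlonglongrightarrow> integral {0..t} (\<lambda>s. G (z s) s)"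
      using dominated_convergence[where f="\<lambda>k s. G (P k s) s" and h="\<lambda>_. M" and S="{0..t}",
          OF integ[OF contP] integrable_const_ivl _ convG] bnd by auto
    have "(\<lambda>k. P (Suc k) t) \<longlonglongrightarrow> x0 + integral {0..t} (\<lambda>s. G (z s) s)"
      using tendsto_add[OF tendsto_const dc(2), of x0] by (simp add: P_def)
    moreover have "(\<lambda>k. P (Suc k) t) \<longlonglongrightarrow> z t" using conv[OF t] by (rule LIMSEQ_Suc)
    ultimately show ?thesis using dc(1) LIMSEQ_unique by blast
  qed
  have "continuous_on {0..} (\<lambda>t. x0 + integral {0..t} (\<lambda>s. G (z s) s))"
    by (intro continuous_intros integral_cont[where M=M]) (use eqn bnd in auto)
  then have "continuous_on {0..} z"
    by (rule continuous_on_eq) (use eqn in auto)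
  with eqn show ?thesis by blast
qed


definition pc :: "real \<Rightarrow> real" where "pc x = max 0 (min 1 x)"
definition cv :: "('i::finite \<Rightarrow> 'o) \<Rightarrow> 'o \<Rightarrow> real^'i \<Rightarrow> real^'i" where
  "cv h a \<nu> = (\<chi> i. if h i = a then pc (\<nu>$i) else 0)"
definition mskv :: "('i::finite \<Rightarrow> 'o) \<Rightarrow> 'o \<Rightarrow> real^'i \<Rightarrow> real^'i" where
  "mskv h a y = (\<chi> j. if h j = a then y$j else 0)"
definition Gm :: "('i::finite \<Rightarrow> 'o) \<Rightarrow> 'o \<Rightarrow> real^'i \<Rightarrow> real^'i^'i \<Rightarrow> real^'i" where
  "Gm h a \<nu> M = mskv h a (cv h a \<nu> v* M) - blocksum h a (cv h a \<nu> v* M) *\<^sub>R cv h a \<nu>"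

lemma Delta_unique:
  assumes "\<nu> \<in> Delta h a" "\<nu> \<in> Delta h b" shows "a = b"
proof -
  from assms(1) have "(\<Sum>i\<in>UNIV. \<nu>$i) = 1" by (simp add: Delta_def)
  have "\<exists>i. \<nu>$i \<noteq> 0"
  proof (rule ccontr)
    assume "\<not> (\<exists>i. \<nu>$i \<noteq> 0)"
    then have "(\<Sum>i\<in>UNIV. \<nu>$i) = 0" by simp
    with \<open>(\<Sum>i\<in>UNIV. \<nu>$i) = 1\<close> show False by simp
  qed
  then obtain i where "\<nu>$i \<noteq> 0" by blast
  with assms show ?thesis by (auto simp: Delta_def)
qed

lemma blk_eq: "\<nu> \<in> Delta h a \<Longrightarrow> blk h \<nu> = a"
  unfolding blk_def by (rule the_equality) (auto dest: Delta_unique)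

lemma Delta_le1: assumes "\<nu> \<in> Delta h a" shows "\<nu>$i \<le> 1"
proof -
  have "\<nu>$i \<le> (\<Sum>j\<in>UNIV. \<nu>$j)" using assms by (intro member_le_sum) (auto simp: Delta_def)
  thus ?thesis using assms by (simp add: Delta_def)
qed

lemma cv_Delta: assumes "\<nu> \<in> Delta h a" shows "cv h a \<nu> = \<nu>"
  unfolding vec_eq_iff
proof
  fix i
  have "0 \<le> \<nu>$i" "\<nu>$i \<le> 1" "h i \<noteq> a \<Longrightarrow> \<nu>$i = 0"
    using assms Delta_le1[OF assms, of i] by (auto simp: Delta_def)
  thus "cv h a \<nu> $ i = \<nu> $ i" by (simp add: cv_def pc_def)
qed

lemma Fv_Gm: assumes "\<nu> \<in> Delta h a" shows "Fv h \<Lambda> \<nu> u = Gm h a \<nu> (\<Lambda> u)"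
  unfolding vec_eq_iff
proof
  fix j
  have b: "blk h \<nu> = a" using assms by (rule blk_eq)
  have c: "cv h a \<nu> = \<nu>" using assms by (rule cv_Delta)
  have "h j \<noteq> a \<Longrightarrow> \<nu>$j = 0" using assms by (auto simp: Delta_def)
  thus "Fv h \<Lambda> \<nu> u $ j = Gm h a \<nu> (\<Lambda> u) $ j"
    unfolding Fv_def Gm_def mskv_def b c by simp
qed

lemma blocksum_diff: "blocksum h a (x - y) = blocksum h a x - blocksum h a y"
  by (simp add: blocksum_def sum_subtractf)

lemma abs_blocksum: "\<bar>blocksum h a (y::real^'i::finite)\<bar> \<le> real CARD('i) * norm y"
proof -
  have "\<bar>blocksum h a y\<bar> \<le> (\<Sum>i | h i = a. \<bar>y$i\<bar>)" unfolding blocksum_def by (rule sum_abs)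
  also have "\<dots> \<le> (\<Sum>i\<in>UNIV. \<bar>y$i\<bar>)" by (intro sum_mono2) auto
  also have "\<dots> \<le> (\<Sum>i\<in>(UNIV::'i set). norm y)" by (intro sum_mono component_le_norm_cart)
  finally show ?thesis by simp
qed

lemma norm_vm:
  fixes M :: "real^'i::finite^'i"
  assumes "\<And>i j. \<bar>M$i$j\<bar> \<le> B"
  shows "norm (x v* M) \<le> real CARD('i) * real CARD('i) * B * norm x"
proof -
  have "norm (x v* M) \<le> (\<Sum>j\<in>UNIV. \<bar>(x v* M)$j\<bar>)" by (rule norm_le_l1_cart)
  also have "\<dots> \<le> (\<Sum>j\<in>(UNIV::'i set). \<Sum>i\<in>(UNIV::'i set). norm x * B)"
  proof (intro sum_mono)
    fix j
    have "\<bar>(x v* M)$j\<bar> \<le> (\<Sum>i\<in>UNIV. \<bar>x$i * M$i$j\<bar>)"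
      unfolding vector_matrix_mult_def by simp
    also have "\<dots> \<le> (\<Sum>i\<in>(UNIV::'i set). norm x * B)"
      by (intro sum_mono) (auto simp: abs_mult intro!: mult_mono component_le_norm_cart assms)
    finally show "\<bar>(x v* M)$j\<bar> \<le> (\<Sum>i\<in>(UNIV::'i set). norm x * B)" .
  qed
  finally show ?thesis by (simp add: algebra_simps)
qed

lemma norm_mskv: "norm (mskv h a y) \<le> norm y"
  by (rule norm_le_componentwise_cart) (auto simp: mskv_def)

lemma pc_lip: "\<bar>pc x - pc y\<bar> \<le> \<bar>x - y\<bar>"
  by (auto simp: pc_def)

lemma cv_lip: "norm (cv h a x - cv h a y) \<le> norm (x - y)"
  by (rule norm_le_componentwise_cart) (auto simp: cv_def pc_lip)

lemma cv_bound: "norm (cv h a (x::real^'i::finite)) \<le> real CARD('i)"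
proof -
  have "norm (cv h a x) \<le> (\<Sum>i\<in>UNIV. \<bar>cv h a x $ i\<bar>)" by (rule norm_le_l1_cart)
  also have "\<dots> \<le> (\<Sum>i\<in>(UNIV::'i set). 1)" by (intro sum_mono) (auto simp: cv_def pc_def)
  finally show ?thesis by simp
qed

lemma vm_bnd2:
  fixes M :: "real^'i::finite^'i"
  assumes B: "\<And>i j. \<bar>M$i$j\<bar> \<le> B" and x: "norm x \<le> c"
  shows "norm (x v* M) \<le> real CARD('i) * real CARD('i) * B * c"
proof -
  have B0: "B \<ge> 0" using B[of undefined undefined] by linarith
  have "norm (x v* M) \<le> real CARD('i) * real CARD('i) * B * norm x" by (rule norm_vm[OF B])
  also have "\<dots> \<le> real CARD('i) * real CARD('i) * B * c" using B0 x by (intro mult_left_mono) auto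
  finally show ?thesis .
qed

lemma bs_bnd2:
  fixes M :: "real^'i::finite^'i"
  assumes B: "\<And>i j. \<bar>M$i$j\<bar> \<le> B" and x: "norm x \<le> c"
  shows "\<bar>blocksum h a (x v* M)\<bar> \<le> real CARD('i) * (real CARD('i) * real CARD('i) * B * c)"
proof -
  have "\<bar>blocksum h a (x v* M)\<bar> \<le> real CARD('i) * norm (x v* M)" by (rule abs_blocksum)
  also have "\<dots> \<le> real CARD('i) * (real CARD('i) * real CARD('i) * B * c)"
    by (intro mult_left_mono vm_bnd2[OF B x]) auto
  finally show ?thesis .
qed

lemma Gm_lip:
  fixes M :: "real^'i::finite^'i"
  assumes B: "\<And>i j. \<bar>M$i$j\<bar> \<le> B"
  shows "norm (Gm h a x M - Gm h a y M) \<le> (real CARD('i)^2 * B + 2 * real CARD('i)^4 * B) * norm (x - y)"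
proof -
  define n where "n = real CARD('i)"
  have n0: "n \<ge> 0" by (simp add: n_def)
  have B0: "B \<ge> 0" using B[of undefined undefined] by linarith
  define cx cy where "cx = cv h a x" and "cy = cv h a y"
  have dxy: "norm (cx - cy) \<le> norm (x - y)" by (simp add: cx_def cy_def cv_lip)
  have cyb: "norm cy \<le> n" "norm cx \<le> n" by (simp_all add: cx_def cy_def n_def cv_bound)
  have eq: "Gm h a x M - Gm h a y M = mskv h a ((cx - cy) v* M)
      - (blocksum h a (cx v* M) *\<^sub>R (cx - cy) + (blocksum h a ((cx - cy) v* M)) *\<^sub>R cy)"
    unfolding Gm_def cx_def[symmetric] cy_def[symmetric] vec_eq_iff
  proof
    fix j
    show "(mskv h a (cx v* M) - blocksum h a (cx v* M) *\<^sub>R cx - (mskv h a (cy v* M) - blocksum h a (cy v* M) *\<^sub>R cy)) $ j =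
      (mskv h a ((cx - cy) v* M) - (blocksum h a (cx v* M) *\<^sub>R (cx - cy) + blocksum h a ((cx - cy) v* M) *\<^sub>R cy)) $ j"
      by (simp add: mskv_def vector_matrix_mult_diff_distrib blocksum_diff algebra_simps)
  qed
  have t1: "norm (mskv h a ((cx - cy) v* M)) \<le> n * n * B * norm (x - y)"
    using order_trans[OF norm_mskv vm_bnd2[OF B dxy]] by (simp add: n_def)
  have t2: "norm (blocksum h a (cx v* M) *\<^sub>R (cx - cy)) \<le> (n * (n * n * B * n)) * norm (x - y)"
  proof -
    have "norm (blocksum h a (cx v* M) *\<^sub>R (cx - cy)) = \<bar>blocksum h a (cx v* M)\<bar> * norm (cx - cy)" by simp
    also have "\<dots> \<le> (n * (n * n * B * n)) * norm (x - y)"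
      using bs_bnd2[OF B cyb(2), of h a] dxy n0 B0 unfolding n_def by (intro mult_mono) auto
    finally show ?thesis .
  qed
  have t3: "norm (blocksum h a ((cx - cy) v* M) *\<^sub>R cy) \<le> (n * (n * n * B * norm (x - y))) * n"
  proof -
    have "norm (blocksum h a ((cx - cy) v* M) *\<^sub>R cy) = \<bar>blocksum h a ((cx - cy) v* M)\<bar> * norm cy" by simp
    also have "\<dots> \<le> (n * (n * n * B * norm (x - y))) * n"
      using bs_bnd2[OF B dxy, of h a] cyb n0 B0 unfolding n_def by (intro mult_mono) auto
    finally show ?thesis .
  qed
  have "norm (Gm h a x M - Gm h a y M) \<le> norm (mskv h a ((cx - cy) v* M))
      + (norm (blocksum h a (cx v* M) *\<^sub>R (cx - cy)) + norm (blocksum h a ((cx - cy) v* M) *\<^sub>R cy))"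
    unfolding eq by (rule order_trans[OF norm_triangle_ineq4 add_left_mono[OF norm_triangle_ineq]])
  also have "\<dots> \<le> n * n * B * norm (x - y) + ((n * (n * n * B * n)) * norm (x - y) + (n * (n * n * B * norm (x - y))) * n)"
    using t1 t2 t3 by linarith
  also have "\<dots> = (n^2 * B + 2 * n^4 * B) * norm (x - y)" by (simp add: algebra_simps eval_nat_numeral)
  finally show ?thesis by (simp add: n_def)
qed

lemma Gm_bound:
  fixes M :: "real^'i::finite^'i"
  assumes B: "\<And>i j. \<bar>M$i$j\<bar> \<le> B"
  shows "norm (Gm h a x M) \<le> real CARD('i)^3 * B + real CARD('i)^5 * B"
proof -
  define n where "n = real CARD('i)"
  have n0: "n \<ge> 0" by (simp add: n_def)
  have B0: "B \<ge> 0" using B[of undefined undefined] by linarith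
  define cx where "cx = cv h a x"
  have cb: "norm cx \<le> n" by (simp add: cx_def n_def cv_bound)
  have t1: "norm (mskv h a (cx v* M)) \<le> n * n * B * n"
    using order_trans[OF norm_mskv vm_bnd2[OF B cb]] by (simp add: n_def)
  have t2: "norm (blocksum h a (cx v* M) *\<^sub>R cx) \<le> (n * (n * n * B * n)) * n"
  proof -
    have "norm (blocksum h a (cx v* M) *\<^sub>R cx) = \<bar>blocksum h a (cx v* M)\<bar> * norm cx" by simp
    also have "\<dots> \<le> (n * (n * n * B * n)) * n"
      using bs_bnd2[OF B cb, of h a] cb n0 B0 unfolding n_def by (intro mult_mono) auto
    finally show ?thesis .
  qed
  have "norm (Gm h a x M) \<le> norm (mskv h a (cx v* M)) + norm (blocksum h a (cx v* M) *\<^sub>R cx)"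
    unfolding Gm_def cx_def[symmetric] by (rule norm_triangle_ineq4)
  also have "\<dots> \<le> n * n * B * n + (n * (n * n * B * n)) * n" using t1 t2 by linarith
  also have "\<dots> = n^3 * B + n^5 * B" by (simp add: algebra_simps eval_nat_numeral)
  finally show ?thesis by (simp add: n_def)
qed

lemma cont_if_const[continuous_intros]:
  "continuous_on S f \<Longrightarrow> continuous_on S g \<Longrightarrow> continuous_on S (\<lambda>x. if P then f x else g x)"
  by (cases P) auto

lemma continuous_Gm: "continuous_on UNIV (\<lambda>p. Gm h a (fst p) (snd p))"
  unfolding Gm_def mskv_def cv_def pc_def blocksum_def vector_matrix_mult_def
  by (simp only: vec_lambda_beta) (intro cont_if_const continuous_on_vec_lambda continuous_intros)


locale sett =
  fixes h :: "'i::finite \<Rightarrow> 'o::finite"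
    and U :: "'u::metric_space set"
    and \<Lambda> :: "'u \<Rightarrow> real^'i^'i"
    and f :: "'i \<Rightarrow> 'u \<Rightarrow> real"
    and \<beta> :: real
    and nu0 :: "'o \<Rightarrow> real^'i"
    and qd :: "'o \<Rightarrow> 'o \<Rightarrow> real"
    and w :: "real^'i \<Rightarrow> real"
  assumes U_compact: "compact U"
    and U_ne: "U \<noteq> {}"
    and Lambda_offdiag: "\<forall>u\<in>U. \<forall>i j. i \<noteq> j \<longrightarrow> 0 \<le> \<Lambda> u $ i $ j"
    and Lambda_rows: "\<forall>u\<in>U. \<forall>i. (\<Sum>j\<in>UNIV. \<Lambda> u $ i $ j) = 0"
    and beta_pos: "\<beta> > 0"
    and nu0_in: "\<forall>b. nu0 b \<in> Delta h b"
    and qd_prob: "\<forall>a. (\<forall>b. 0 \<le> qd a b) \<and> qd a a = 0 \<and> (\<Sum>b\<in>UNIV. qd a b) = 1"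
    and Lambda_cont: "\<forall>i j. continuous_on U (\<lambda>u. \<Lambda> u $ i $ j)"
    and f_cont: "\<forall>i. continuous_on U (f i)"
    and w_cont: "continuous_on (Delta_e h) w"
begin

lemma Lam_cont: "continuous_on U \<Lambda>"
proof -
  have "continuous_on U (\<lambda>u. \<chi> i. \<chi> j. \<Lambda> u $ i $ j)"
    using Lambda_cont by (intro continuous_on_vec_lambda) auto
  thus ?thesis by simp
qed

lemma Lam_bound_ex: "\<exists>B. B \<ge> 0 \<and> (\<forall>u\<in>U. \<forall>i j. \<bar>\<Lambda> u $ i $ j\<bar> \<le> B)"
proof -
  have "bounded (\<Lambda> ` U)" by (intro compact_imp_bounded compact_continuous_image Lam_cont U_compact)
  then obtain B where B: "\<And>u. u \<in> U \<Longrightarrow> norm (\<Lambda> u) \<le> B" by (auto simp: bounded_iff)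
  have "\<bar>\<Lambda> u $ i $ j\<bar> \<le> B" if "u \<in> U" for u i j
    using component_le_norm_cart[of "\<Lambda> u $ i" j] Finite_Cartesian_Product.norm_nth_le[of "\<Lambda> u" i] B[OF that]
    by linarith
  moreover have "B \<ge> 0" using B U_ne norm_ge_zero by (metis all_not_in_conv order_trans)
  ultimately show ?thesis by blast
qed

definition "B = (SOME B. B \<ge> 0 \<and> (\<forall>u\<in>U. \<forall>i j. \<bar>\<Lambda> u $ i $ j\<bar> \<le> B))"

lemma B: "B \<ge> 0" "\<And>u i j. u \<in> U \<Longrightarrow> \<bar>\<Lambda> u $ i $ j\<bar> \<le> B"
  using someI_ex[OF Lam_bound_ex] unfolding B_def[symmetric] by auto

definition "KG = real CARD('i)^2 * B + 2 * real CARD('i)^4 * B + 1"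
definition "MG = real CARD('i)^3 * B + real CARD('i)^5 * B"

lemma KG_pos: "KG > 0"
proof -
  have "0 \<le> real CARD('i)^2 * B" "0 \<le> 2 * real CARD('i)^4 * B" using B(1) by simp_all
  thus ?thesis unfolding KG_def by linarith
qed

lemma Gm_lipU: "u \<in> U \<Longrightarrow> norm (Gm h a x (\<Lambda> u) - Gm h a y (\<Lambda> u)) \<le> KG * norm (x - y)"
proof -
  assume u: "u \<in> U"
  have "norm (Gm h a x (\<Lambda> u) - Gm h a y (\<Lambda> u)) \<le> (real CARD('i)^2 * B + 2 * real CARD('i)^4 * B) * norm (x - y)"
    by (rule Gm_lip) (use B(2)[OF u] in auto)
  also have "\<dots> \<le> KG * norm (x - y)" unfolding KG_def by (intro mult_right_mono) auto
  finally show ?thesis .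
qed

lemma Gm_boundU: "u \<in> U \<Longrightarrow> norm (Gm h a x (\<Lambda> u)) \<le> MG"
  unfolding MG_def by (rule Gm_bound) (use B(2) in auto)

lemma Ctrl_in: "\<alpha> \<in> Ctrl U \<Longrightarrow> s \<ge> 0 \<Longrightarrow> \<alpha> s \<in> U"
  by (auto simp: Ctrl_def)

lemma ctrl_comp:
  assumes "\<alpha> \<in> Ctrl U" "continuous_on U g"
  shows "(\<lambda>s. g (\<alpha> s)) \<in> borel_measurable (lebesgue_on {0..})"
proof -
  have a1: "\<alpha> \<in> measurable (lebesgue_on {0..}) (restrict_space borel U)"
    using assms(1) by (intro measurable_restrict_space2) (auto simp: Ctrl_def space_restrict_space)
  have a2: "g \<in> borel_measurable (restrict_space borel U)"
    by (rule borel_measurable_continuous_on_restrict[OF assms(2)])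
  from measurable_comp[OF a1 a2] show ?thesis by (simp add: comp_def)
qed

lemma Gm_meas:
  assumes "\<alpha> \<in> Ctrl U" "continuous_on {0..} z"
  shows "(\<lambda>s. Gm h a (z s) (\<Lambda> (\<alpha> s))) \<in> borel_measurable (lebesgue_on {0..})"
proof -
  have "(\<lambda>s. (z s, \<Lambda> (\<alpha> s))) \<in> borel_measurable (lebesgue_on {0..})"
    by (intro borel_measurable_Pair continuous_imp_measurable_on_sets_lebesgue assms ctrl_comp Lam_cont) auto
  from borel_measurable_continuous_on[OF continuous_Gm this] show ?thesis by simp
qed

lemma sol_exists:
  assumes "\<alpha> \<in> Ctrl U"
  shows "\<exists>z. continuous_on {0..} z \<and> (\<forall>t\<ge>0. (\<lambda>s. Gm h a (z s) (\<Lambda> (\<alpha> s))) integrable_on {0..t}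
           \<and> z t = \<rho> + integral {0..t} (\<lambda>s. Gm h a (z s) (\<Lambda> (\<alpha> s))))"
proof (rule picard_exists[where G="\<lambda>x s. Gm h a x (\<Lambda> (\<alpha> s))" and M=MG and K=KG])
  show "norm (Gm h a x (\<Lambda> (\<alpha> s))) \<le> MG" if "s \<ge> 0" for x s
    by (rule Gm_boundU[OF Ctrl_in[OF assms that]])
  show "norm (Gm h a x (\<Lambda> (\<alpha> s)) - Gm h a y (\<Lambda> (\<alpha> s))) \<le> KG * norm (x - y)" if "s \<ge> 0" for x y s
    by (rule Gm_lipU[OF Ctrl_in[OF assms that]])
  show "KG > 0" by (rule KG_pos)
  show "(\<lambda>s. Gm h a (z s) (\<Lambda> (\<alpha> s))) \<in> borel_measurable (lebesgue_on {0..})" if "continuous_on {0..} z" for z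
    by (rule Gm_meas[OF assms that])
qed

end


lemma cv_sum_le:
  fixes x :: "real^'i::finite"
  assumes nn: "\<And>j. 0 \<le> x$j" and off: "\<And>j. h j \<noteq> a \<Longrightarrow> x$j = 0"
  shows "\<bar>1 - (\<Sum>j\<in>UNIV. cv h a x $ j)\<bar> \<le> \<bar>1 - (\<Sum>j\<in>UNIV. x$j)\<bar>"
proof -
  have cj: "cv h a x $ j = min (x$j) 1" for j
    using nn[of j] off[of j] by (auto simp: cv_def pc_def)
  show ?thesis
  proof (cases "\<forall>j. x$j \<le> 1")
    case True
    then have "cv h a x = x" by (simp add: vec_eq_iff cj)
    thus ?thesis by simp
  next
    case False
    then obtain k where k: "x$k > 1" by (auto simp: not_le)
    have "cv h a x $ k \<le> (\<Sum>j\<in>UNIV. cv h a x $ j)"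
      by (rule member_le_sum) (auto simp: cj nn)
    then have s1: "1 \<le> (\<Sum>j\<in>UNIV. cv h a x $ j)" using k by (simp add: cj)
    have s2: "(\<Sum>j\<in>UNIV. cv h a x $ j) \<le> (\<Sum>j\<in>UNIV. x $ j)"
      by (rule sum_mono) (simp add: cj)
    show ?thesis using s1 s2 by linarith
  qed
qed

lemma sum_mskv: "(\<Sum>j\<in>UNIV. mskv h a y $ j) = blocksum h a y"
  unfolding mskv_def blocksum_def by (simp add: sum.If_cases)

lemma bounded_linear_sumv: "bounded_linear (\<lambda>x::real^'i::finite. \<Sum>j\<in>UNIV. x $ j)"
  by (intro bounded_linear_sum bounded_linear_vec_nth)

context sett
begin

lemma Fj_nonneg:
  assumes u: "u \<in> U" and j: "h j = a" and z: "z $ j \<le> 0"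
  shows "Gm h a z (\<Lambda> u) $ j \<ge> 0"
proof -
  have cj: "cv h a z $ j = 0" using j z by (simp add: cv_def pc_def)
  have "0 \<le> (\<Sum>i\<in>UNIV. cv h a z $ i * \<Lambda> u $ i $ j)"
  proof (intro sum_nonneg)
    fix i show "0 \<le> cv h a z $ i * \<Lambda> u $ i $ j"
    proof (cases "i = j")
      case True thus ?thesis using cj by simp
    next
      case False
      have "0 \<le> cv h a z $ i" by (simp add: cv_def pc_def)
      moreover have "0 \<le> \<Lambda> u $ i $ j" using Lambda_offdiag u False by auto
      ultimately show ?thesis by simp
    qed
  qed
  thus ?thesis using j cj by (simp add: Gm_def mskv_def vector_matrix_mult_def)
qed

lemma sigma_Gm:
  assumes u: "u \<in> U" and nn: "\<And>j. 0 \<le> x$j" and off: "\<And>j. h j \<noteq> a \<Longrightarrow> x$j = 0"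
  shows "\<bar>\<Sum>j\<in>UNIV. Gm h a x (\<Lambda> u) $ j\<bar> \<le> real CARD('i) ^ 4 * B * \<bar>1 - (\<Sum>j\<in>UNIV. x$j)\<bar>"
proof -
  define c where "c = cv h a x"
  define S where "S = blocksum h a (c v* \<Lambda> u)"
  have "(\<Sum>j\<in>UNIV. Gm h a x (\<Lambda> u) $ j) = S - S * (\<Sum>j\<in>UNIV. c $ j)"
    unfolding Gm_def c_def[symmetric] S_def[symmetric]
    by (simp add: sum_subtractf sum_mskv S_def sum_distrib_left)
  also have "\<dots> = S * (1 - (\<Sum>j\<in>UNIV. c $ j))" by (simp add: algebra_simps)
  finally have eq: "(\<Sum>j\<in>UNIV. Gm h a x (\<Lambda> u) $ j) = S * (1 - (\<Sum>j\<in>UNIV. c $ j))" .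
  have Sb: "\<bar>S\<bar> \<le> real CARD('i) * (real CARD('i) * real CARD('i) * B * real CARD('i))"
    unfolding S_def by (rule bs_bnd2) (use B(2)[OF u] in \<open>auto simp: c_def cv_bound\<close>)
  have cb: "\<bar>1 - (\<Sum>j\<in>UNIV. c $ j)\<bar> \<le> \<bar>1 - (\<Sum>j\<in>UNIV. x$j)\<bar>"
    unfolding c_def by (rule cv_sum_le[OF nn off])
  have "\<bar>\<Sum>j\<in>UNIV. Gm h a x (\<Lambda> u) $ j\<bar> = \<bar>S\<bar> * \<bar>1 - (\<Sum>j\<in>UNIV. c $ j)\<bar>"
    by (simp add: eq abs_mult)
  also have "\<dots> \<le> (real CARD('i) * (real CARD('i) * real CARD('i) * B * real CARD('i))) * \<bar>1 - (\<Sum>j\<in>UNIV. x$j)\<bar>"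
    by (intro mult_mono Sb cb) (use B(1) in auto)
  also have "\<dots> = real CARD('i) ^ 4 * B * \<bar>1 - (\<Sum>j\<in>UNIV. x$j)\<bar>"
    by (simp add: algebra_simps eval_nat_numeral)
  finally show ?thesis .
qed

lemma inv:
  assumes \<alpha>: "\<alpha> \<in> Ctrl U" and \<rho>: "\<rho> \<in> Delta h a"
    and zc: "continuous_on {0..} z"
    and zi: "\<And>t. t \<ge> 0 \<Longrightarrow> (\<lambda>s. Gm h a (z s) (\<Lambda> (\<alpha> s))) integrable_on {0..t}"
    and ze: "\<And>t. t \<ge> 0 \<Longrightarrow> z t = \<rho> + integral {0..t} (\<lambda>s. Gm h a (z s) (\<Lambda> (\<alpha> s)))"
    and t: "t \<ge> 0"
  shows "z t \<in> Delta h a"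
proof -
  define F where "F = (\<lambda>s. Gm h a (z s) (\<Lambda> (\<alpha> s)))"
  have Fi: "F integrable_on {0..t}" if "t \<ge> 0" for t using zi[OF that] by (simp add: F_def)
  have Fji: "(\<lambda>s. F s $ j) integrable_on {0..t}" if "t \<ge> 0" for t j
    using integrable_linear[OF Fi[OF that] bounded_linear_vec_nth[of j]] by (simp add: o_def)
  have comp: "z t $ j = \<rho> $ j + integral {0..t} (\<lambda>s. F s $ j)" if "t \<ge> 0" for t j
    using ze[OF that] Fi[OF that] by (simp add: F_def[symmetric])
  have off: "z t $ j = 0" if "t \<ge> 0" "h j \<noteq> a" for t j
  proof -
    have "\<And>s. F s $ j = 0" using that(2) by (simp add: F_def Gm_def mskv_def cv_def)
    then have "integral {0..t} (\<lambda>s. F s $ j) = 0" by simp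
    thus ?thesis using comp[OF that(1)] \<rho> that(2) by (simp add: Delta_def)
  qed
  have zjc: "continuous_on {0..} (\<lambda>s. z s $ j)" for j
    using zc by (intro continuous_intros)
  have z0: "z 0 = \<rho>" using ze[of 0] by simp
  have nonneg: "z t $ j \<ge> 0" if t: "t \<ge> 0" and j: "h j = a" for t j
  proof (rule ccontr)
    assume neg: "\<not> z t $ j \<ge> 0"
    define Z where "Z = {0..t} \<inter> (\<lambda>s. z s $ j) -` {0..}"
    have clZ: "closed Z" unfolding Z_def
      by (rule continuous_closed_preimage) (auto intro!: continuous_on_subset[OF zjc[of j]])
    have Z0: "0 \<in> Z" using t \<rho> z0 by (auto simp: Z_def Delta_def)
    have bZ: "bdd_above Z" by (rule bdd_aboveI[of _ t]) (auto simp: Z_def)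
    define \<tau> where "\<tau> = Sup Z"
    have \<tau>Z: "\<tau> \<in> Z" unfolding \<tau>_def by (rule closed_contains_Sup) (use Z0 bZ clZ in auto)
    have \<tau>0: "0 \<le> \<tau>" "\<tau> \<le> t" "z \<tau> $ j \<ge> 0" using \<tau>Z by (auto simp: Z_def)
    have \<tau>t: "\<tau> < t" using \<tau>0 neg by (cases "\<tau> = t") auto
    have after: "z s $ j < 0" if "\<tau> < s" "s \<le> t" for s
    proof (rule ccontr)
      assume "\<not> z s $ j < 0"
      then have "s \<in> Z" using that \<tau>0 by (auto simp: Z_def)
      then have "s \<le> \<tau>" unfolding \<tau>_def using bZ by (rule cSup_upper)
      thus False using that by simp
    qed
    have z\<tau>: "z \<tau> $ j \<le> 0"
    proof (rule ccontr)
      assume pos: "\<not> z \<tau> $ j \<le> 0"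
      obtain d where d: "d > 0" "\<And>s. s \<in> {0..} \<Longrightarrow> dist s \<tau> < d \<Longrightarrow> dist (z s $ j) (z \<tau> $ j) < z \<tau> $ j"
        using zjc[of j] \<tau>0 pos unfolding continuous_on_iff by (metis atLeast_iff not_le)
      define s where "s = min (\<tau> + d / 2) t"
      have s: "\<tau> < s" "s \<le> t" "s \<in> {0..}" "dist s \<tau> < d" using d \<tau>t \<tau>0
        by (auto simp: s_def dist_real_def)
      have "dist (z s $ j) (z \<tau> $ j) < z \<tau> $ j" using d(2)[OF s(3,4)] .
      then have "z s $ j > 0" by (simp add: dist_real_def)
      with after[OF s(1,2)] show False by simp
    qed
    have nonnegF: "F s $ j \<ge> 0" if "s \<in> {\<tau>..t}" for s
    proof -
      have "z s $ j \<le> 0" using that z\<tau> after[of s] by (cases "s = \<tau>") auto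
      moreover have "\<alpha> s \<in> U" using Ctrl_in[OF \<alpha>] that \<tau>0 by auto
      ultimately show ?thesis unfolding F_def using Fj_nonneg j by blast
    qed
    have int\<tau>t: "(\<lambda>s. F s $ j) integrable_on {\<tau>..t}"
      by (rule integrable_on_subinterval[OF Fji[OF t]]) (use \<tau>0 in auto)
    have I: "integral {\<tau>..t} (\<lambda>s. F s $ j) \<ge> 0"
      by (rule integral_nonneg[OF int\<tau>t nonnegF])
    have "integral {0..\<tau>} (\<lambda>s. F s $ j) + integral {\<tau>..t} (\<lambda>s. F s $ j) = integral {0..t} (\<lambda>s. F s $ j)"
      by (rule Henstock_Kurzweil_Integration.integral_combine) (use \<tau>0 Fji[OF t] in auto)
    then have "z t $ j = z \<tau> $ j + integral {\<tau>..t} (\<lambda>s. F s $ j)"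
      using comp[OF t, of j] comp[OF \<tau>0(1), of j] by simp
    with I \<tau>0 neg show False by simp
  qed
  define \<sigma> where "\<sigma> x = (\<Sum>j\<in>UNIV. x $ j)" for x :: "real^'i"
  have bl: "bounded_linear \<sigma>" unfolding \<sigma>_def by (rule bounded_linear_sumv)
  define d where "d s = \<bar>\<sigma> (z s) - 1\<bar>" for s
  have dc: "continuous_on {0..t} d" unfolding d_def \<sigma>_def
    using zc t by (intro continuous_intros) (auto intro: continuous_on_subset)
  have \<sigma>1: "\<sigma> \<rho> = 1" using \<rho> by (simp add: \<sigma>_def Delta_def)
  have nnall: "0 \<le> z s $ j" if "s \<ge> 0" for s j
    using nonneg[OF that, of j] off[OF that, of j] by (cases "h j = a") auto
  have \<sigma>F: "\<bar>\<sigma> (F s)\<bar> \<le> real CARD('i) ^ 4 * B * d s" if "s \<ge> 0" for s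
  proof -
    have "\<bar>\<sigma> (F s)\<bar> \<le> real CARD('i) ^ 4 * B * \<bar>1 - \<sigma> (z s)\<bar>"
      unfolding F_def \<sigma>_def
      by (rule sigma_Gm) (use Ctrl_in[OF \<alpha> that] nnall[OF that] off[OF that] in auto)
    thus ?thesis by (simp add: d_def abs_minus_commute)
  qed
  have dle: "d s \<le> (real CARD('i) ^ 4 * B) * integral {0..s} d" if s: "s \<in> {0..t}" for s
  proof -
    have s0: "s \<ge> 0" using s by auto
    have zs: "z s = \<rho> + integral {0..s} F" using ze[OF s0] by (simp add: F_def)
    have "\<sigma> (z s) = \<sigma> \<rho> + \<sigma> (integral {0..s} F)"
      unfolding zs by (simp add: \<sigma>_def sum.distrib)
    then have "\<sigma> (z s) = \<sigma> \<rho> + integral {0..s} (\<sigma> \<circ> F)"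
      using integral_linear[OF Fi[OF s0] bl] by simp
    then have "d s = \<bar>integral {0..s} (\<sigma> \<circ> F)\<bar>" by (simp add: d_def \<sigma>1)
    also have "\<dots> \<le> integral {0..s} (\<lambda>r. real CARD('i) ^ 4 * B * d r)"
    proof -
      have "norm (integral {0..s} (\<sigma> \<circ> F)) \<le> integral {0..s} (\<lambda>r. real CARD('i) ^ 4 * B * d r)"
      proof (rule integral_norm_bound_integral)
        show "(\<sigma> \<circ> F) integrable_on {0..s}" by (rule integrable_linear[OF Fi[OF s0] bl])
        show "(\<lambda>r. real CARD('i) ^ 4 * B * d r) integrable_on {0..s}"
          by (intro integrable_continuous_real continuous_intros continuous_on_subset[OF dc]) (use s in auto)
        fix r assume "r \<in> {0..s}" thus "norm ((\<sigma> \<circ> F) r) \<le> real CARD('i) ^ 4 * B * d r"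
          using \<sigma>F[of r] by auto
      qed
      thus ?thesis by simp
    qed
    also have "\<dots> = (real CARD('i) ^ 4 * B) * integral {0..s} d" by simp
    finally show ?thesis .
  qed
  have "d t \<le> 0" by (rule gronwall0[OF dc _ dle]) (use B(1) t in auto)
  then have s1: "\<sigma> (z t) = 1" by (simp add: d_def)
  show ?thesis unfolding Delta_def
  proof (intro CollectI conjI allI impI)
    fix i show "0 \<le> z t $ i" using nonneg[OF t, of i] off[OF t, of i] by (cases "h i = a") auto
  next
    show "(\<Sum>i\<in>UNIV. z t $ i) = 1" using s1 by (simp add: \<sigma>_def)
  next
    fix i assume "h i \<noteq> a" thus "z t $ i = 0" by (rule off[OF t])
  qed
qed

end


context sett
begin

lemma sol_cont:
  assumes \<alpha>: "\<alpha> \<in> Ctrl U"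
    and yi: "\<And>t. t \<ge> 0 \<Longrightarrow> (\<lambda>s. Gm h a (y s) (\<Lambda> (\<alpha> s))) integrable_on {0..t}"
    and ye: "\<And>t. t \<ge> 0 \<Longrightarrow> y t = \<rho> + integral {0..t} (\<lambda>s. Gm h a (y s) (\<Lambda> (\<alpha> s)))"
  shows "continuous_on {0..} y"
proof -
  have "continuous_on {0..} (\<lambda>t. \<rho> + integral {0..t} (\<lambda>s. Gm h a (y s) (\<Lambda> (\<alpha> s))))"
    by (intro continuous_intros integral_cont[where M=MG] yi Gm_boundU Ctrl_in[OF \<alpha>])
  thus ?thesis by (rule continuous_on_eq) (use ye in auto)
qed

lemma sol_gronwall:
  assumes \<alpha>: "\<alpha> \<in> Ctrl U"
    and yi: "\<And>t. t \<ge> 0 \<Longrightarrow> (\<lambda>s. Gm h a (y s) (\<Lambda> (\<alpha> s))) integrable_on {0..t}"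
    and ye: "\<And>t. t \<ge> 0 \<Longrightarrow> y t = \<rho>1 + integral {0..t} (\<lambda>s. Gm h a (y s) (\<Lambda> (\<alpha> s)))"
    and zi: "\<And>t. t \<ge> 0 \<Longrightarrow> (\<lambda>s. Gm h a (z s) (\<Lambda> (\<alpha> s))) integrable_on {0..t}"
    and ze: "\<And>t. t \<ge> 0 \<Longrightarrow> z t = \<rho>2 + integral {0..t} (\<lambda>s. Gm h a (z s) (\<Lambda> (\<alpha> s)))"
    and t: "t \<ge> 0"
  shows "norm (y t - z t) \<le> norm (\<rho>1 - \<rho>2) * exp (KG * t)"
proof -
  have yc: "continuous_on {0..} y" by (rule sol_cont[OF \<alpha> yi ye])
  have zc: "continuous_on {0..} z" by (rule sol_cont[OF \<alpha> zi ze])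
  define d where "d s = norm (y s - z s)" for s
  have dc: "continuous_on {0..t} d" unfolding d_def
    by (intro continuous_intros continuous_on_subset[OF yc] continuous_on_subset[OF zc]) auto
  have dle: "d s \<le> norm (\<rho>1 - \<rho>2) + KG * integral {0..s} d" if s: "s \<in> {0..t}" for s
  proof -
    have s0: "s \<ge> 0" using s by auto
    have "y s - z s = (\<rho>1 - \<rho>2) + integral {0..s} (\<lambda>r. Gm h a (y r) (\<Lambda> (\<alpha> r)) - Gm h a (z r) (\<Lambda> (\<alpha> r)))"
      using ye[OF s0] ze[OF s0] integral_diff[OF yi[OF s0] zi[OF s0]] by simp
    then have "d s \<le> norm (\<rho>1 - \<rho>2) + norm (integral {0..s} (\<lambda>r. Gm h a (y r) (\<Lambda> (\<alpha> r)) - Gm h a (z r) (\<Lambda> (\<alpha> r))))"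
      unfolding d_def by (simp add: norm_triangle_ineq)
    also have "norm (integral {0..s} (\<lambda>r. Gm h a (y r) (\<Lambda> (\<alpha> r)) - Gm h a (z r) (\<Lambda> (\<alpha> r)))) \<le> integral {0..s} (\<lambda>r. KG * d r)"
    proof (rule integral_norm_bound_integral)
      show "(\<lambda>r. Gm h a (y r) (\<Lambda> (\<alpha> r)) - Gm h a (z r) (\<Lambda> (\<alpha> r))) integrable_on {0..s}"
        by (rule integrable_diff[OF yi[OF s0] zi[OF s0]])
      show "(\<lambda>r. KG * d r) integrable_on {0..s}"
        by (intro integrable_continuous_real continuous_intros continuous_on_subset[OF dc]) (use s in auto)
      fix r assume "r \<in> {0..s}"
      thus "norm (Gm h a (y r) (\<Lambda> (\<alpha> r)) - Gm h a (z r) (\<Lambda> (\<alpha> r))) \<le> KG * d r"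
        unfolding d_def by (intro Gm_lipU Ctrl_in[OF \<alpha>]) auto
    qed
    also have "integral {0..s} (\<lambda>r. KG * d r) = KG * integral {0..s} d" by simp
    finally show ?thesis by simp
  qed
  show ?thesis using gronwall[OF dc _ dle, of t] KG_pos t by (simp add: d_def)
qed

lemma phi_props:
  assumes \<alpha>: "\<alpha> \<in> Ctrl U" and \<rho>: "\<rho> \<in> Delta h a"
  shows "\<And>t. t < 0 \<Longrightarrow> phi h \<Lambda> \<alpha> \<rho> t = \<rho>"
    and "\<And>t. t \<ge> 0 \<Longrightarrow> phi h \<Lambda> \<alpha> \<rho> t \<in> Delta h a"
    and "\<And>t. t \<ge> 0 \<Longrightarrow> (\<lambda>s. Gm h a (phi h \<Lambda> \<alpha> \<rho> s) (\<Lambda> (\<alpha> s))) integrable_on {0..t}"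
    and "\<And>t. t \<ge> 0 \<Longrightarrow> phi h \<Lambda> \<alpha> \<rho> t = \<rho> + integral {0..t} (\<lambda>s. Gm h a (phi h \<Lambda> \<alpha> \<rho> s) (\<Lambda> (\<alpha> s)))"
    and "continuous_on {0..} (phi h \<Lambda> \<alpha> \<rho>)"
proof -
  obtain z where zc: "continuous_on {0..} z" and
    zie: "\<And>t. t \<ge> 0 \<Longrightarrow> (\<lambda>s. Gm h a (z s) (\<Lambda> (\<alpha> s))) integrable_on {0..t}
           \<and> z t = \<rho> + integral {0..t} (\<lambda>s. Gm h a (z s) (\<Lambda> (\<alpha> s)))"
    using sol_exists[OF \<alpha>, of a \<rho>] by blast
  have zi: "\<And>t. t \<ge> 0 \<Longrightarrow> (\<lambda>s. Gm h a (z s) (\<Lambda> (\<alpha> s))) integrable_on {0..t}"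
    and ze: "\<And>t. t \<ge> 0 \<Longrightarrow> z t = \<rho> + integral {0..t} (\<lambda>s. Gm h a (z s) (\<Lambda> (\<alpha> s)))"
    using zie by auto
  have zD: "z t \<in> Delta h a" if "t \<ge> 0" for t by (rule inv[OF \<alpha> \<rho> zc zi ze that])
  define z' where "z' t = (if t < 0 then \<rho> else z t)" for t
  have blk\<rho>: "blk h \<rho> = a" using \<rho> by (rule blk_eq)
  define P where "P = (\<lambda>y. (\<forall>t<0. y t = \<rho>) \<and>
     (\<forall>t\<ge>0. y t \<in> Delta h (blk h \<rho>)
        \<and> (\<lambda>s. Fv h \<Lambda> (y s) (\<alpha> s)) integrable_on {0..t}
        \<and> y t = \<rho> + integral {0..t} (\<lambda>s. Fv h \<Lambda> (y s) (\<alpha> s))))"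
  have phiP: "phi h \<Lambda> \<alpha> \<rho> = (THE y. P y)" unfolding phi_def P_def by simp
  have Pz': "P z'"
  proof -
    have eqs: "Fv h \<Lambda> (z' s) (\<alpha> s) = Gm h a (z s) (\<Lambda> (\<alpha> s))" if "s \<in> {0..t}" for s t
      using that zD[of s] by (simp add: z'_def Fv_Gm)
    show ?thesis unfolding P_def blk\<rho>
    proof (intro conjI allI impI)
      fix t :: real assume "t < 0" thus "z' t = \<rho>" by (simp add: z'_def)
    next
      fix t :: real assume t: "t \<ge> 0"
      show "z' t \<in> Delta h a" using zD[OF t] t by (simp add: z'_def)
      show "(\<lambda>s. Fv h \<Lambda> (z' s) (\<alpha> s)) integrable_on {0..t}"
        by (rule integrable_eq[OF zi[OF t]]) (use eqs in auto)
      have "integral {0..t} (\<lambda>s. Fv h \<Lambda> (z' s) (\<alpha> s)) = integral {0..t} (\<lambda>s. Gm h a (z s) (\<Lambda> (\<alpha> s)))"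
        by (rule integral_cong) (use eqs in auto)
      thus "z' t = \<rho> + integral {0..t} (\<lambda>s. Fv h \<Lambda> (z' s) (\<alpha> s))" using ze[OF t] t by (simp add: z'_def)
    qed
  qed
  have uniq: "y = z'" if Py: "P y" for y
  proof
    fix t :: real
    show "y t = z' t"
    proof (cases "t < 0")
      case True thus ?thesis using Py by (simp add: P_def z'_def)
    next
      case False
      then have t: "t \<ge> 0" by simp
      have yD: "y s \<in> Delta h a" if "s \<ge> 0" for s using Py that unfolding P_def blk\<rho> by blast
      have eqs: "Fv h \<Lambda> (y s) (\<alpha> s) = Gm h a (y s) (\<Lambda> (\<alpha> s))" if "s \<in> {0..t'}" for s t'
        using that yD[of s] by (simp add: Fv_Gm)
      have yi: "(\<lambda>s. Gm h a (y s) (\<Lambda> (\<alpha> s))) integrable_on {0..t'}" if "t' \<ge> 0" for t'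
        by (rule integrable_eq[of "\<lambda>s. Fv h \<Lambda> (y s) (\<alpha> s)"]) (use Py that eqs in \<open>auto simp: P_def\<close>)
      have ye: "y t' = \<rho> + integral {0..t'} (\<lambda>s. Gm h a (y s) (\<Lambda> (\<alpha> s)))" if "t' \<ge> 0" for t'
      proof -
        have "integral {0..t'} (\<lambda>s. Fv h \<Lambda> (y s) (\<alpha> s)) = integral {0..t'} (\<lambda>s. Gm h a (y s) (\<Lambda> (\<alpha> s)))"
          by (rule integral_cong) (use eqs in auto)
        thus ?thesis using Py that by (simp add: P_def)
      qed
      have "norm (y t - z t) \<le> norm (\<rho> - \<rho>) * exp (KG * t)"
        by (rule sol_gronwall[OF \<alpha> yi ye zi ze t])
      thus ?thesis using t by (simp add: z'_def)
    qed
  qed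
  have phieq: "phi h \<Lambda> \<alpha> \<rho> = z'" unfolding phiP by (rule the_equality[of P z', OF Pz' uniq])
  show "\<And>t. t < 0 \<Longrightarrow> phi h \<Lambda> \<alpha> \<rho> t = \<rho>" by (simp add: phieq z'_def)
  show "\<And>t. t \<ge> 0 \<Longrightarrow> phi h \<Lambda> \<alpha> \<rho> t \<in> Delta h a" by (simp add: phieq z'_def zD)
  have eqz: "phi h \<Lambda> \<alpha> \<rho> s = z s" if "s \<in> {0..t}" for s t using that by (simp add: phieq z'_def)
  show "\<And>t. t \<ge> 0 \<Longrightarrow> (\<lambda>s. Gm h a (phi h \<Lambda> \<alpha> \<rho> s) (\<Lambda> (\<alpha> s))) integrable_on {0..t}"
    by (rule integrable_eq[OF zi]) (use eqz in auto)
  show "\<And>t. t \<ge> 0 \<Longrightarrow> phi h \<Lambda> \<alpha> \<rho> t = \<rho> + integral {0..t} (\<lambda>s. Gm h a (phi h \<Lambda> \<alpha> \<rho> s) (\<Lambda> (\<alpha> s)))"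
  proof -
    fix t :: real assume t: "t \<ge> 0"
    have "integral {0..t} (\<lambda>s. Gm h a (phi h \<Lambda> \<alpha> \<rho> s) (\<Lambda> (\<alpha> s))) = integral {0..t} (\<lambda>s. Gm h a (z s) (\<Lambda> (\<alpha> s)))"
      by (rule integral_cong) (use eqz in auto)
    thus "phi h \<Lambda> \<alpha> \<rho> t = \<rho> + integral {0..t} (\<lambda>s. Gm h a (phi h \<Lambda> \<alpha> \<rho> s) (\<Lambda> (\<alpha> s)))"
      using ze[OF t] eqz[of t t] t by simp
  qed
  show "continuous_on {0..} (phi h \<Lambda> \<alpha> \<rho>)"
    by (rule continuous_on_eq[OF zc]) (simp add: phieq z'_def)
qed

lemma phi_dep:
  assumes \<alpha>: "\<alpha> \<in> Ctrl U" and \<rho>1: "\<rho>1 \<in> Delta h a" and \<rho>2: "\<rho>2 \<in> Delta h a" and t: "t \<ge> 0"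
  shows "norm (phi h \<Lambda> \<alpha> \<rho>1 t - phi h \<Lambda> \<alpha> \<rho>2 t) \<le> norm (\<rho>1 - \<rho>2) * exp (KG * t)"
  by (rule sol_gronwall[OF \<alpha> phi_props(3)[OF \<alpha> \<rho>1] phi_props(4)[OF \<alpha> \<rho>1]
        phi_props(3)[OF \<alpha> \<rho>2] phi_props(4)[OF \<alpha> \<rho>2] t])

end


definition Rm :: "('i::finite \<Rightarrow> 'o) \<Rightarrow> 'o \<Rightarrow> real^'i \<Rightarrow> real^'i^'i \<Rightarrow> real" where
  "Rm h a \<nu> M = - blocksum h a (\<nu> v* M)"

lemma exp_neg_lip:
  fixes x y :: real assumes "x \<ge> 0" "y \<ge> 0"
  shows "\<bar>exp (- x) - exp (- y)\<bar> \<le> \<bar>x - y\<bar>"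
proof -
  have key: "exp (- x) - exp (- y) \<le> y - x" if "0 \<le> x" "x \<le> y" for x y :: real
  proof -
    have "exp (- x) - exp (- y) = exp (- x) * (1 - exp (- (y - x)))"
      by (simp add: algebra_simps flip: exp_add)
    also have "\<dots> \<le> 1 * (1 - exp (- (y - x)))"
      using that by (intro mult_right_mono) auto
    also have "\<dots> \<le> y - x" using exp_ge_add_one_self[of "x - y"] by (simp add: algebra_simps)
    finally show ?thesis .
  qed
  show ?thesis
  proof (cases "x \<le> y")
    case True
    have "exp (- y) \<le> exp (- x)" using True by simp
    thus ?thesis using key[OF assms(1) True] True by simp
  next
    case False
    have "exp (- x) \<le> exp (- y)" using False by simp
    thus ?thesis using key[OF assms(2)] False by simp
  qed
qed

lemma norm_Delta: assumes "\<nu> \<in> Delta h a" shows "norm \<nu> \<le> 1"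
proof -
  have "norm \<nu> \<le> (\<Sum>i\<in>UNIV. \<bar>\<nu>$i\<bar>)" by (rule norm_le_l1_cart)
  also have "\<dots> = (\<Sum>i\<in>UNIV. \<nu>$i)" using assms by (intro sum.cong) (auto simp: Delta_def)
  also have "\<dots> = 1" using assms by (simp add: Delta_def)
  finally show ?thesis .
qed

lemma continuous_Rm: "continuous_on UNIV (\<lambda>p::((real^'i::finite) \<times> (real^'i^'i)). Rm h a (fst p) (snd p))"
proof -
  have "(\<lambda>p::((real^'i) \<times> (real^'i^'i)). Rm h a (fst p) (snd p)) = (\<lambda>p. - (\<Sum>j | h j = a. \<Sum>i\<in>UNIV. fst p $ i * snd p $ i $ j))"
    by (simp add: Rm_def blocksum_def vector_matrix_mult_def)
  moreover have "continuous_on UNIV (\<lambda>p::((real^'i) \<times> (real^'i^'i)). - (\<Sum>j | h j = a. \<Sum>i\<in>UNIV. fst p $ i * snd p $ i $ j))"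
    by (intro continuous_intros)
  ultimately show ?thesis by metis
qed

context sett
begin

definition "KR = real CARD('i) ^ 3 * B"

lemma KR_nonneg: "KR \<ge> 0" using B(1) by (simp add: KR_def)

lemma rr_eq: "\<nu> \<in> Delta h a \<Longrightarrow> rr h \<Lambda> \<nu> u = Rm h a \<nu> (\<Lambda> u)"
  by (simp add: rr_def Rm_def blk_eq)

lemma row_block_le0:
  assumes u: "u \<in> U" and i: "h i = a"
  shows "(\<Sum>j | h j = a. \<Lambda> u $ i $ j) \<le> 0"
proof -
  have "(\<Sum>j\<in>UNIV. \<Lambda> u $ i $ j) = (\<Sum>j\<in>UNIV. (if h j = a then \<Lambda> u $ i $ j else 0))
          + (\<Sum>j\<in>UNIV. (if h j = a then 0 else \<Lambda> u $ i $ j))"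
    by (simp add: sum.distrib[symmetric]) (intro sum.cong; simp)
  moreover have "(\<Sum>j\<in>UNIV. (if h j = a then \<Lambda> u $ i $ j else 0)) = (\<Sum>j | h j = a. \<Lambda> u $ i $ j)"
    by (simp add: sum.If_cases)
  moreover have "0 \<le> (\<Sum>j\<in>UNIV. (if h j = a then 0 else \<Lambda> u $ i $ j))"
  proof (intro sum_nonneg)
    fix j show "0 \<le> (if h j = a then 0 else \<Lambda> u $ i $ j)"
      using Lambda_offdiag u i by (cases "i = j") auto
  qed
  ultimately show ?thesis using Lambda_rows u by auto
qed

lemma Rm_nonneg:
  assumes \<nu>: "\<nu> \<in> Delta h a" and u: "u \<in> U"
  shows "Rm h a \<nu> (\<Lambda> u) \<ge> 0"
proof -
  have "blocksum h a (\<nu> v* \<Lambda> u) = (\<Sum>j | h j = a. \<Sum>i\<in>UNIV. \<nu>$i * \<Lambda> u $ i $ j)"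
    by (simp add: blocksum_def vector_matrix_mult_def)
  also have "\<dots> = (\<Sum>i\<in>UNIV. \<nu>$i * (\<Sum>j | h j = a. \<Lambda> u $ i $ j))"
    by (simp add: sum.swap[of _ "{j. h j = a}"] sum_distrib_left)
  also have "\<dots> \<le> 0"
  proof (intro sum_nonpos)
    fix i show "\<nu>$i * (\<Sum>j | h j = a. \<Lambda> u $ i $ j) \<le> 0"
    proof (cases "h i = a")
      case True
      have "0 \<le> \<nu>$i" using \<nu> by (simp add: Delta_def)
      thus ?thesis using row_block_le0[OF u True] by (simp add: mult_nonneg_nonpos)
    next
      case False thus ?thesis using \<nu> by (simp add: Delta_def)
    qed
  qed
  finally show ?thesis by (simp add: Rm_def)
qed

lemma Rm_lip:
  assumes u: "u \<in> U"
  shows "\<bar>Rm h a x (\<Lambda> u) - Rm h a y (\<Lambda> u)\<bar> \<le> KR * norm (x - y)"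
proof -
  have "\<bar>Rm h a x (\<Lambda> u) - Rm h a y (\<Lambda> u)\<bar> = \<bar>blocksum h a ((x - y) v* \<Lambda> u)\<bar>"
    by (simp add: Rm_def vector_matrix_mult_diff_distrib blocksum_diff)
  also have "\<dots> \<le> real CARD('i) * (real CARD('i) * real CARD('i) * B * norm (x - y))"
    by (rule bs_bnd2) (use B(2)[OF u] in auto)
  also have "\<dots> = KR * norm (x - y)" by (simp add: KR_def algebra_simps eval_nat_numeral)
  finally show ?thesis .
qed

lemma Rm_bound:
  assumes u: "u \<in> U" and \<nu>: "\<nu> \<in> Delta h a"
  shows "\<bar>Rm h a \<nu> (\<Lambda> u)\<bar> \<le> KR"
proof -
  have "\<bar>Rm h a \<nu> (\<Lambda> u)\<bar> = \<bar>blocksum h a (\<nu> v* \<Lambda> u)\<bar>" by (simp add: Rm_def)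
  also have "\<dots> \<le> real CARD('i) * (real CARD('i) * real CARD('i) * B * 1)"
    by (rule bs_bnd2) (use B(2)[OF u] norm_Delta[OF \<nu>] in auto)
  also have "\<dots> = KR" by (simp add: KR_def algebra_simps eval_nat_numeral)
  finally show ?thesis .
qed

lemma Rm_meas:
  assumes "\<alpha> \<in> Ctrl U" "continuous_on {0..} z"
  shows "(\<lambda>s. Rm h a (z s) (\<Lambda> (\<alpha> s))) \<in> borel_measurable (lebesgue_on {0..})"
proof -
  have "(\<lambda>s. (z s, \<Lambda> (\<alpha> s))) \<in> borel_measurable (lebesgue_on {0..})"
    by (intro borel_measurable_Pair continuous_imp_measurable_on_sets_lebesgue assms ctrl_comp Lam_cont) auto
  from borel_measurable_continuous_on[OF continuous_Rm this] show ?thesis by simp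
qed

lemma chi_props:
  assumes \<alpha>: "\<alpha> \<in> Ctrl U" and \<rho>: "\<rho> \<in> Delta h a"
  shows "\<And>t. t \<ge> 0 \<Longrightarrow> (\<lambda>s. Rm h a (phi h \<Lambda> \<alpha> \<rho> s) (\<Lambda> (\<alpha> s))) integrable_on {0..t}"
    and "\<And>t. t \<ge> 0 \<Longrightarrow> chi h \<Lambda> \<alpha> \<rho> t = exp (- integral {0..t} (\<lambda>s. Rm h a (phi h \<Lambda> \<alpha> \<rho> s) (\<Lambda> (\<alpha> s))))"
    and "\<And>t. t \<ge> 0 \<Longrightarrow> 0 \<le> integral {0..t} (\<lambda>s. Rm h a (phi h \<Lambda> \<alpha> \<rho> s) (\<Lambda> (\<alpha> s)))"
    and "\<And>t. t \<ge> 0 \<Longrightarrow> 0 \<le> chi h \<Lambda> \<alpha> \<rho> t \<and> chi h \<Lambda> \<alpha> \<rho> t \<le> 1"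
    and "continuous_on {0..} (chi h \<Lambda> \<alpha> \<rho>)"
proof -
  let ?p = "phi h \<Lambda> \<alpha> \<rho>"
  let ?R = "\<lambda>s. Rm h a (?p s) (\<Lambda> (\<alpha> s))"
  have pD: "\<And>s. s \<ge> 0 \<Longrightarrow> ?p s \<in> Delta h a" by (rule phi_props(2)[OF \<alpha> \<rho>])
  have Rb: "\<And>s. s \<ge> 0 \<Longrightarrow> norm (?R s) \<le> KR" using Rm_bound[OF Ctrl_in[OF \<alpha>] pD] by simp
  show Ri: "\<And>t. t \<ge> 0 \<Longrightarrow> ?R integrable_on {0..t}"
    by (rule int_bounded_meas[OF Rm_meas[OF \<alpha> phi_props(5)[OF \<alpha> \<rho>]] Rb])
  have eqR: "rr h \<Lambda> (?p s) (\<alpha> s) = ?R s" if "s \<in> {0..t}" for s t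
    using that pD[of s] by (simp add: rr_eq)
  show chieq: "\<And>t. t \<ge> 0 \<Longrightarrow> chi h \<Lambda> \<alpha> \<rho> t = exp (- integral {0..t} ?R)"
  proof -
    fix t :: real assume "t \<ge> 0"
    have "integral {0..t} (\<lambda>s. rr h \<Lambda> (?p s) (\<alpha> s)) = integral {0..t} ?R"
      by (rule integral_cong) (use eqR in auto)
    thus "chi h \<Lambda> \<alpha> \<rho> t = exp (- integral {0..t} ?R)" by (simp add: chi_def)
  qed
  show Inn: "\<And>t. t \<ge> 0 \<Longrightarrow> 0 \<le> integral {0..t} ?R"
    by (rule integral_nonneg[OF Ri]) (use Rm_nonneg[OF pD Ctrl_in[OF \<alpha>]] in auto)
  show "\<And>t. t \<ge> 0 \<Longrightarrow> 0 \<le> chi h \<Lambda> \<alpha> \<rho> t \<and> chi h \<Lambda> \<alpha> \<rho> t \<le> 1"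
    using chieq Inn by auto
  have "continuous_on {0..} (\<lambda>t. exp (- integral {0..t} ?R))"
    by (intro continuous_intros integral_cont[where M=KR] Ri Rb)
  thus "continuous_on {0..} (chi h \<Lambda> \<alpha> \<rho>)"
    by (rule continuous_on_eq) (use chieq in auto)
qed

lemma chi_dep:
  assumes \<alpha>: "\<alpha> \<in> Ctrl U" and \<rho>1: "\<rho>1 \<in> Delta h a" and \<rho>2: "\<rho>2 \<in> Delta h a" and t: "t \<ge> 0"
  shows "\<bar>chi h \<Lambda> \<alpha> \<rho>1 t - chi h \<Lambda> \<alpha> \<rho>2 t\<bar> \<le> KR * t * (norm (\<rho>1 - \<rho>2) * exp (KG * t))"
proof -
  let ?R1 = "\<lambda>s. Rm h a (phi h \<Lambda> \<alpha> \<rho>1 s) (\<Lambda> (\<alpha> s))"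
  let ?R2 = "\<lambda>s. Rm h a (phi h \<Lambda> \<alpha> \<rho>2 s) (\<Lambda> (\<alpha> s))"
  have "\<bar>chi h \<Lambda> \<alpha> \<rho>1 t - chi h \<Lambda> \<alpha> \<rho>2 t\<bar> \<le> \<bar>integral {0..t} ?R1 - integral {0..t} ?R2\<bar>"
    using exp_neg_lip[OF chi_props(3)[OF \<alpha> \<rho>1 t] chi_props(3)[OF \<alpha> \<rho>2 t]]
    by (simp add: chi_props(2)[OF \<alpha> \<rho>1 t] chi_props(2)[OF \<alpha> \<rho>2 t])
  also have "\<dots> = norm (integral {0..t} (\<lambda>s. ?R1 s - ?R2 s))"
    using integral_diff[OF chi_props(1)[OF \<alpha> \<rho>1 t] chi_props(1)[OF \<alpha> \<rho>2 t]] by simp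
  also have "\<dots> \<le> integral {0..t} (\<lambda>s. KR * (norm (\<rho>1 - \<rho>2) * exp (KG * t)))"
  proof (rule integral_norm_bound_integral)
    show "(\<lambda>s. ?R1 s - ?R2 s) integrable_on {0..t}"
      by (rule integrable_diff[OF chi_props(1)[OF \<alpha> \<rho>1 t] chi_props(1)[OF \<alpha> \<rho>2 t]])
    fix s assume s: "s \<in> {0..t}"
    have "norm (?R1 s - ?R2 s) \<le> KR * norm (phi h \<Lambda> \<alpha> \<rho>1 s - phi h \<Lambda> \<alpha> \<rho>2 s)"
      using Rm_lip[OF Ctrl_in[OF \<alpha>]] s by auto
    also have "\<dots> \<le> KR * (norm (\<rho>1 - \<rho>2) * exp (KG * s))"
      using phi_dep[OF \<alpha> \<rho>1 \<rho>2, of s] s KR_nonneg by (intro mult_left_mono) auto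
    also have "\<dots> \<le> KR * (norm (\<rho>1 - \<rho>2) * exp (KG * t))"
      using s KG_pos KR_nonneg by (intro mult_left_mono) (auto intro!: mult_left_mono)
    finally show "norm (?R1 s - ?R2 s) \<le> KR * (norm (\<rho>1 - \<rho>2) * exp (KG * t))" .
  qed auto
  also have "\<dots> = KR * t * (norm (\<rho>1 - \<rho>2) * exp (KG * t))" using t by simp
  finally show ?thesis .
qed

end


definition Tb :: "('i::finite \<Rightarrow> 'o) \<Rightarrow> ('o \<Rightarrow> real^'i) \<Rightarrow> (real^'i \<Rightarrow> real) \<Rightarrow> 'o \<Rightarrow> real^'i \<Rightarrow> real" where
  "Tb h nu0 w b y = blocksum h b y * w (Hb h nu0 b y)"

definition Yb :: "('i::finite \<Rightarrow> 'o) \<Rightarrow> 'o \<Rightarrow> (real^'i) set" where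
  "Yb h b = {y. \<forall>i. h i = b \<longrightarrow> 0 \<le> y$i}"

lemma closed_Delta: "closed (Delta h a)"
proof -
  have "Delta h a = (\<Inter>i. {\<nu>. 0 \<le> \<nu>$i}) \<inter> {\<nu>. (\<Sum>i\<in>UNIV. \<nu>$i) = 1} \<inter> (\<Inter>i\<in>{i. h i \<noteq> a}. {\<nu>. \<nu>$i = 0})"
    by (auto simp: Delta_def)
  moreover have "closed \<dots>"
    by (intro closed_Int closed_INT closed_Collect_le closed_Collect_eq continuous_intros ballI)
  ultimately show ?thesis by simp
qed

lemma compact_Delta: "compact (Delta h a)"
  unfolding compact_eq_bounded_closed
proof
  show "bounded (Delta h a)" unfolding bounded_iff by (rule exI[of _ 1]) (auto intro: norm_Delta)
qed (rule closed_Delta)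

lemma Delta_sub: "Delta h a \<subseteq> Delta_e h" by (auto simp: Delta_e_def)

lemma compact_Delta_e: "compact (Delta_e (h::'i::finite \<Rightarrow> 'o::finite))"
  unfolding Delta_e_def by (intro compact_Union) (auto intro: compact_Delta)

lemma blocksum_nonneg: "y \<in> Yb h b \<Longrightarrow> 0 \<le> blocksum h b y"
  unfolding blocksum_def Yb_def by (intro sum_nonneg) auto

lemma Hb_in:
  assumes y: "y \<in> Yb h b" and nu0: "nu0 b \<in> Delta h b"
  shows "Hb h nu0 b y \<in> Delta h b"
proof (cases "blocksum h b y = 0")
  case True thus ?thesis using nu0 by (simp add: Hb_def)
next
  case False
  then have pos: "blocksum h b y > 0" using blocksum_nonneg[OF y] by simp
  have "(\<Sum>i\<in>UNIV. (if h i = b then y$i / blocksum h b y else 0)) = (\<Sum>i | h i = b. y$i / blocksum h b y)"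
    by (simp add: sum.If_cases)
  also have "\<dots> = blocksum h b y / blocksum h b y" unfolding blocksum_def by (rule sum_divide_distrib[symmetric])
  also have "\<dots> = 1" using pos by simp
  finally have s: "(\<Sum>i\<in>UNIV. (if h i = b then y$i / blocksum h b y else 0)) = 1" .
  show ?thesis using False pos y s by (auto simp: Hb_def Delta_def Yb_def)
qed

lemma continuous_blocksum: "continuous_on S (\<lambda>y::real^'i::finite. blocksum h b y)"
  unfolding blocksum_def by (intro continuous_intros)

lemma Tb_cont:
  assumes w: "continuous_on (Delta_e h) w" and nu0: "nu0 b \<in> Delta h b"
  shows "continuous_on (Yb h b) (Tb h nu0 w (b::'o::finite))"
proof -
  obtain Wm where Wm: "\<And>x. x \<in> Delta_e h \<Longrightarrow> norm (w x) \<le> Wm"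
    using compact_imp_bounded[OF compact_continuous_image[OF w compact_Delta_e]]
    by (auto simp: bounded_iff)
  let ?Y = "Yb h b"
  let ?bs = "\<lambda>y. blocksum h b y"
  have Hb_e: "Hb h nu0 b y \<in> Delta_e h" if "y \<in> ?Y" for y
    by (rule subsetD[OF Delta_sub Hb_in[of y h b nu0, OF that nu0]])
  show ?thesis unfolding continuous_on_eq_continuous_within
  proof
    fix y0 assume y0: "y0 \<in> ?Y"
    have bsc: "(?bs \<longlongrightarrow> ?bs y0) (at y0 within ?Y)"
      using continuous_blocksum[of UNIV h b] unfolding continuous_on_def
      by (auto intro: filterlim_within_subset)
    show "continuous (at y0 within ?Y) (Tb h nu0 w b)"
    proof (cases "?bs y0 = 0")
      case True
      have T0: "Tb h nu0 w b y0 = 0" using True by (simp add: Tb_def)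
      have ev: "eventually (\<lambda>y. norm (Tb h nu0 w b y) \<le> Wm * \<bar>?bs y\<bar>) (at y0 within ?Y)"
      proof -
        have "norm (Tb h nu0 w b y) \<le> Wm * \<bar>?bs y\<bar>" if "y \<in> ?Y" for y
        proof -
          have "norm (Tb h nu0 w b y) = \<bar>?bs y\<bar> * norm (w (Hb h nu0 b y))"
            by (simp add: Tb_def abs_mult)
          also have "\<dots> \<le> \<bar>?bs y\<bar> * Wm" by (intro mult_left_mono Wm Hb_e that) auto
          finally show ?thesis by (simp add: mult.commute)
        qed
        thus ?thesis by (auto simp: eventually_at_filter)
      qed
      have "((\<lambda>y. Wm * \<bar>?bs y\<bar>) \<longlongrightarrow> Wm * \<bar>?bs y0\<bar>) (at y0 within ?Y)"
        by (intro tendsto_intros bsc)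
      then have l0: "((\<lambda>y. Wm * \<bar>?bs y\<bar>) \<longlongrightarrow> 0) (at y0 within ?Y)" using True by simp
      have "(Tb h nu0 w b \<longlongrightarrow> 0) (at y0 within ?Y)" by (rule Lim_null_comparison[OF ev l0])
      thus ?thesis unfolding continuous_within T0 .
    next
      case False
      define Ob where "Ob = {y. ?bs y \<noteq> 0}"
      have oO: "open Ob" unfolding Ob_def by (intro open_Collect_neq continuous_blocksum continuous_intros)
      have y0O: "y0 \<in> Ob" using False by (simp add: Ob_def)
      define N where "N y = (\<chi> i. if h i = b then y$i / ?bs y else 0)" for y
      have NH: "N y = Hb h nu0 b y" if "y \<in> Ob" for y using that by (simp add: N_def Hb_def Ob_def)
      have Nc: "continuous_on (?Y \<inter> Ob) N" unfolding N_def
        by (intro continuous_on_vec_lambda cont_if_const continuous_intros continuous_blocksum) (auto simp: Ob_def)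
      have NY: "N ` (?Y \<inter> Ob) \<subseteq> Delta_e h" using NH Hb_e by auto
      have c1: "continuous_on (?Y \<inter> Ob) (\<lambda>y. ?bs y * w (N y))"
        by (intro continuous_intros continuous_blocksum continuous_on_compose2[OF w Nc NY])
      have c2: "continuous_on (?Y \<inter> Ob) (Tb h nu0 w b)"
        by (rule continuous_on_eq[OF c1]) (simp add: Tb_def NH)
      have "continuous (at y0 within (?Y \<inter> Ob)) (Tb h nu0 w b)"
        using c2 y0 y0O unfolding continuous_on_eq_continuous_within by auto
      moreover have "at y0 within ?Y = at y0 within (?Y \<inter> Ob)"
        by (rule at_within_nhd[OF y0O oO]) auto
      ultimately show ?thesis by simp
    qed
  qed
qed

lemma sum_blocksums: "(\<Sum>b\<in>(UNIV::'o::finite set). blocksum h b y) = (\<Sum>i\<in>(UNIV::'i::finite set). y$i)"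
  using sum.group[of "UNIV::'i set" "UNIV::'o set" h "\<lambda>i. y$i"] unfolding blocksum_def by simp

context sett
begin

lemma vm_Yb:
  assumes \<rho>: "\<rho> \<in> Delta h a" and u: "u \<in> U" and b: "b \<noteq> a"
  shows "\<rho> v* \<Lambda> u \<in> Yb h b"
  unfolding Yb_def
proof (intro CollectI allI impI)
  fix i assume i: "h i = b"
  show "0 \<le> (\<rho> v* \<Lambda> u) $ i" unfolding vector_matrix_mult_def
  proof (simp only: vec_lambda_beta, intro sum_nonneg)
    fix k show "0 \<le> \<rho> $ k * \<Lambda> u $ k $ i"
    proof (cases "h k = a")
      case True
      then have "k \<noteq> i" using i b by auto
      then have "0 \<le> \<Lambda> u $ k $ i" using Lambda_offdiag u by auto
      moreover have "0 \<le> \<rho> $ k" using \<rho> by (simp add: Delta_def)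
      ultimately show ?thesis by simp
    next
      case False thus ?thesis using \<rho> by (simp add: Delta_def)
    qed
  qed
qed

lemma rowsum_vm:
  assumes u: "u \<in> U"
  shows "(\<Sum>i\<in>UNIV. (\<rho> v* \<Lambda> u) $ i) = 0"
proof -
  have "(\<Sum>i\<in>UNIV. (\<rho> v* \<Lambda> u) $ i) = (\<Sum>k\<in>UNIV. \<rho>$k * (\<Sum>i\<in>UNIV. \<Lambda> u $ k $ i))"
    by (simp add: vector_matrix_mult_def sum_distrib_left) (rule sum.swap)
  also have "\<dots> = 0" using Lambda_rows u by simp
  finally show ?thesis .
qed

lemma LL_eq:
  assumes \<rho>: "\<rho> \<in> Delta h a" and u: "u \<in> U"
  shows "LL h \<Lambda> f nu0 qd \<rho> s u w = s * ((\<Sum>i\<in>UNIV. \<rho>$i * f i u)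
     + (\<Sum>b\<in>UNIV. if b = a then 0 else Tb h nu0 w b (\<rho> v* \<Lambda> u)))"
proof -
  define y where "y = \<rho> v* \<Lambda> u"
  define d where "d = - blocksum h a y"
  have blk: "blk h \<rho> = a" using \<rho> by (rule blk_eq)
  have rrd: "rr h \<Lambda> \<rho> u = d" by (simp add: rr_def blk d_def y_def)
  have key: "rr h \<Lambda> \<rho> u * (w (Hb h nu0 b y) * qq h \<Lambda> qd \<rho> u b) = (if b = a then 0 else Tb h nu0 w b y)" for b
  proof (cases "d = 0")
    case False
    have "qq h \<Lambda> qd \<rho> u b = (if b \<noteq> a then blocksum h b y / d else 0)"
      using False by (simp add: qq_def blk d_def y_def Let_def)
    thus ?thesis using False by (simp add: rrd Tb_def)
  next
    case True
    have "blocksum h b y = 0" if ba: "b \<noteq> a"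
    proof -
      have nn: "\<And>c. c \<in> UNIV - {a} \<Longrightarrow> 0 \<le> blocksum h c y"
        unfolding y_def by (intro blocksum_nonneg vm_Yb[OF \<rho> u]) auto
      have "(\<Sum>c\<in>UNIV. blocksum h c y) = 0" using rowsum_vm[OF u] by (simp add: sum_blocksums y_def)
      moreover have "(\<Sum>c\<in>UNIV. blocksum h c y) = blocksum h a y + (\<Sum>c\<in>UNIV - {a}. blocksum h c y)"
        by (simp add: sum.remove)
      ultimately have "(\<Sum>c\<in>UNIV - {a}. blocksum h c y) = 0" using True by (simp add: d_def)
      then have "\<forall>c\<in>UNIV - {a}. blocksum h c y = 0" using nn sum_nonneg_eq_0_iff[of "UNIV - {a}" "\<lambda>c. blocksum h c y"] by auto
      thus ?thesis using ba by auto
    qed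
    thus ?thesis using True by (simp add: rrd Tb_def)
  qed
  have "rr h \<Lambda> \<rho> u * intR h \<Lambda> nu0 qd \<rho> u w = (\<Sum>b\<in>UNIV. if b = a then 0 else Tb h nu0 w b y)"
    unfolding intR_def y_def[symmetric] sum_distrib_left using key by simp
  thus ?thesis unfolding LL_def y_def by simp
qed

end


context sett
begin

definition "fv u = (\<chi> i. f i u)"

definition Phi :: "'o \<Rightarrow> (real^'i) \<times> real \<times> ((real^'i^'i) \<times> (real^'i)) \<Rightarrow> real" where
  "Phi a p = fst (snd p) * ((\<Sum>i\<in>UNIV. fst p $ i * snd (snd (snd p)) $ i)
     + (\<Sum>b\<in>UNIV. if b = a then 0 else Tb h nu0 w b (fst p v* fst (snd (snd p)))))"

definition "Kset = (\<lambda>u. (\<Lambda> u, fv u)) ` U"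
definition "Dset a = Delta h a \<times> ({0..1::real} \<times> Kset)"

lemma fv_cont: "continuous_on U fv"
  unfolding fv_def using f_cont by (intro continuous_on_vec_lambda) auto

lemma compact_Dset: "compact (Dset a)"
proof -
  have c01: "compact {0..1::real}" by simp
  show ?thesis unfolding Dset_def Kset_def
    by (intro compact_Times compact_Delta c01 compact_continuous_image continuous_on_Pair Lam_cont fv_cont U_compact)
qed

lemma vm_cont: "continuous_on S (\<lambda>p::(real^'i) \<times> real \<times> ((real^'i^'i) \<times> (real^'i)). fst p v* fst (snd (snd p)))"
  unfolding vector_matrix_mult_def
  by (intro continuous_on_vec_lambda continuous_intros)

lemma Phi_cont: "continuous_on (Dset a) (Phi a)"
proof -
  have hb: "continuous_on (Dset a) (\<lambda>p. if b = a then 0 else Tb h nu0 w b (fst p v* fst (snd (snd p))))" for b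
  proof (cases "b = a")
    case True thus ?thesis by simp
  next
    case False
    have "continuous_on (Dset a) (\<lambda>p. Tb h nu0 w b (fst p v* fst (snd (snd p))))"
    proof (rule continuous_on_compose2[OF Tb_cont[OF w_cont] vm_cont])
      show "nu0 b \<in> Delta h b" using nu0_in by auto
      show "(\<lambda>p. fst p v* fst (snd (snd p))) ` Dset a \<subseteq> Yb h b"
        using vm_Yb False by (auto simp: Dset_def Kset_def)
    qed
    thus ?thesis using False by simp
  qed
  have h1: "continuous_on (Dset a) (\<lambda>p. \<Sum>b\<in>UNIV. if b = a then 0 else Tb h nu0 w b (fst p v* fst (snd (snd p))))"
    by (rule continuous_on_sum) (rule hb)
  have h2: "continuous_on (Dset a) (\<lambda>p::(real^'i) \<times> real \<times> ((real^'i^'i) \<times> (real^'i)). \<Sum>i\<in>UNIV. fst p $ i * snd (snd (snd p)) $ i)"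
    by (intro continuous_intros)
  have h3: "continuous_on (Dset a) (\<lambda>p::(real^'i) \<times> real \<times> ((real^'i^'i) \<times> (real^'i)). fst (snd p))"
    by (intro continuous_intros)
  show ?thesis unfolding Phi_def by (intro continuous_on_mult continuous_on_add h1 h2 h3)
qed

lemma Phi_bound_ex: "\<exists>Lm. Lm \<ge> 0 \<and> (\<forall>p\<in>Dset a. \<bar>Phi a p\<bar> \<le> Lm)"
proof -
  have "bounded (Phi a ` Dset a)"
    by (rule compact_imp_bounded[OF compact_continuous_image[OF Phi_cont compact_Dset]])
  then obtain Lm where Lm: "\<forall>x\<in>Phi a ` Dset a. norm x \<le> Lm" unfolding bounded_iff by blast
  have "\<bar>Phi a p\<bar> \<le> max Lm 0" if "p \<in> Dset a" for p
  proof -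
    have "norm (Phi a p) \<le> Lm" using Lm that by blast
    thus ?thesis by simp
  qed
  thus ?thesis by (intro exI[of _ "max Lm 0"]) auto
qed

lemma LL_Phi:
  assumes \<rho>: "\<rho> \<in> Delta h a" and u: "u \<in> U"
  shows "LL h \<Lambda> f nu0 qd \<rho> s u w = Phi a (\<rho>, s, \<Lambda> u, fv u)"
  unfolding LL_eq[OF \<rho> u] Phi_def by (simp add: fv_def cong: if_cong)

definition "pt \<alpha> \<rho> t = (phi h \<Lambda> \<alpha> \<rho> t, chi h \<Lambda> \<alpha> \<rho> t, \<Lambda> (\<alpha> t), fv (\<alpha> t))"

lemma pt_in:
  assumes \<alpha>: "\<alpha> \<in> Ctrl U" and \<rho>: "\<rho> \<in> Delta h a" and t: "t \<ge> 0"
  shows "pt \<alpha> \<rho> t \<in> Dset a"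
  using phi_props(2)[OF \<alpha> \<rho> t] chi_props(4)[OF \<alpha> \<rho> t] Ctrl_in[OF \<alpha> t]
  by (auto simp: pt_def Dset_def Kset_def)

lemma pt_meas:
  assumes \<alpha>: "\<alpha> \<in> Ctrl U" and \<rho>: "\<rho> \<in> Delta h a"
  shows "pt \<alpha> \<rho> \<in> measurable (lebesgue_on {0..}) (restrict_space borel (Dset a))"
proof (rule measurable_restrict_space2)
  show "pt \<alpha> \<rho> \<in> space (lebesgue_on {0..}) \<rightarrow> Dset a"
    using pt_in[OF \<alpha> \<rho>] by (auto simp: space_restrict_space)
  show "pt \<alpha> \<rho> \<in> borel_measurable (lebesgue_on {0..})"
    unfolding pt_def
    by (intro borel_measurable_Pair continuous_imp_measurable_on_sets_lebesgue
        phi_props(5)[OF \<alpha> \<rho>] chi_props(5)[OF \<alpha> \<rho>] ctrl_comp[OF \<alpha>] Lam_cont fv_cont) auto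
qed

definition "E \<alpha> \<rho> t = exp (- \<beta> * t) * LL h \<Lambda> f nu0 qd (phi h \<Lambda> \<alpha> \<rho> t) (chi h \<Lambda> \<alpha> \<rho> t) (\<alpha> t) w"

lemma E_Phi:
  assumes \<alpha>: "\<alpha> \<in> Ctrl U" and \<rho>: "\<rho> \<in> Delta h a" and t: "t \<ge> 0"
  shows "E \<alpha> \<rho> t = exp (- \<beta> * t) * Phi a (pt \<alpha> \<rho> t)"
  unfolding E_def pt_def using LL_Phi[OF phi_props(2)[OF \<alpha> \<rho> t] Ctrl_in[OF \<alpha> t]] by simp

lemma E_meas:
  assumes \<alpha>: "\<alpha> \<in> Ctrl U" and \<rho>: "\<rho> \<in> Delta h a"
  shows "E \<alpha> \<rho> \<in> borel_measurable (lebesgue_on {0..})"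
proof -
  have "Phi a \<in> borel_measurable (restrict_space borel (Dset a))"
    by (rule borel_measurable_continuous_on_restrict[OF Phi_cont])
  from measurable_comp[OF pt_meas[OF \<alpha> \<rho>] this]
  have m1: "(\<lambda>t. Phi a (pt \<alpha> \<rho> t)) \<in> borel_measurable (lebesgue_on {0..})" by (simp add: comp_def)
  have m2: "(\<lambda>t. exp (- \<beta> * t) * Phi a (pt \<alpha> \<rho> t)) \<in> borel_measurable (lebesgue_on {0..})"
    by (intro borel_measurable_times m1 continuous_imp_measurable_on_sets_lebesgue continuous_intros) auto
  show ?thesis
    by (rule measurable_cong[THEN iffD1, OF _ m2]) (auto simp: space_restrict_space E_Phi[OF \<alpha> \<rho>])
qed

lemma exp_int:
  fixes c :: real
  assumes c: "c > 0"
  shows "(\<lambda>t. exp (- c * t)) integrable_on {0..}" "integral {0..} (\<lambda>t. exp (- c * t)) = 1 / c"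
  using has_integral_exp_minus_to_infinity[OF c, of 0] by (auto simp: integral_unique integrable_on_def)

end


lemma INF_close:
  fixes F G :: "'a \<Rightarrow> real"
  assumes A: "A \<noteq> {}" and le: "\<And>x. x \<in> A \<Longrightarrow> \<bar>F x - G x\<bar> \<le> e"
    and bF: "bdd_below (F ` A)" and bG: "bdd_below (G ` A)"
  shows "\<bar>(INF x\<in>A. F x) - (INF x\<in>A. G x)\<bar> \<le> e"
proof -
  have 1: "(INF x\<in>A. F x) - e \<le> (INF x\<in>A. G x)"
  proof (rule cINF_greatest[OF A])
    fix x assume x: "x \<in> A"
    have "(INF x\<in>A. F x) \<le> F x" by (rule cINF_lower[OF bF x])
    thus "(INF x\<in>A. F x) - e \<le> G x" using le[OF x] by linarith
  qed
  have 2: "(INF x\<in>A. G x) - e \<le> (INF x\<in>A. F x)"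
  proof (rule cINF_greatest[OF A])
    fix x assume x: "x \<in> A"
    have "(INF x\<in>A. G x) \<le> G x" by (rule cINF_lower[OF bG x])
    thus "(INF x\<in>A. G x) - e \<le> F x" using le[OF x] by linarith
  qed
  show ?thesis using 1 2 by linarith
qed

lemma dist_triple_le:
  fixes a a' :: "real^'i::finite" and b b' :: real and M :: "'c::metric_space"
  shows "dist (a, b, M) (a', b', M) \<le> norm (a - a') + \<bar>b - b'\<bar>"
proof -
  have "dist (b, M) (b', M) = \<bar>b - b'\<bar>" by (simp add: dist_Pair_Pair dist_real_def)
  then have "dist (a, b, M) (a', b', M) = sqrt ((dist a a')\<^sup>2 + (\<bar>b - b'\<bar>)\<^sup>2)"
    by (simp add: dist_Pair_Pair)
  also have "\<dots> \<le> \<bar>dist a a'\<bar> + \<bar>\<bar>b - b'\<bar>\<bar>" by (rule sqrt_sum_squares_le_sum_abs)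
  finally show ?thesis by (simp add: dist_norm)
qed

context sett
begin

definition "Lm a = (SOME Lm. Lm \<ge> 0 \<and> (\<forall>p\<in>Dset a. \<bar>Phi a p\<bar> \<le> Lm))"

lemma Lm: "Lm a \<ge> 0" "\<And>p. p \<in> Dset a \<Longrightarrow> \<bar>Phi a p\<bar> \<le> Lm a"
  using someI_ex[OF Phi_bound_ex[of a]] unfolding Lm_def[symmetric] by auto

lemma E_bound:
  assumes \<alpha>: "\<alpha> \<in> Ctrl U" and \<rho>: "\<rho> \<in> Delta h a" and t: "t \<ge> 0"
  shows "\<bar>E \<alpha> \<rho> t\<bar> \<le> Lm a * exp (- \<beta> * t)"
proof -
  have "\<bar>E \<alpha> \<rho> t\<bar> = exp (- \<beta> * t) * \<bar>Phi a (pt \<alpha> \<rho> t)\<bar>" by (simp add: E_Phi[OF \<alpha> \<rho> t] abs_mult)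
  also have "\<dots> \<le> exp (- \<beta> * t) * Lm a" by (intro mult_left_mono Lm pt_in[OF \<alpha> \<rho> t]) auto
  finally show ?thesis by (simp add: mult.commute)
qed

lemma exp_hasint:
  fixes c k :: real assumes "c > 0"
  shows "((\<lambda>t. k * exp (- c * t)) has_integral k * (1 / c)) {0..}"
  using has_integral_mult_right[OF has_integral_exp_minus_to_infinity[OF assms, of 0], of k] by simp

lemma E_abs:
  assumes \<alpha>: "\<alpha> \<in> Ctrl U" and \<rho>: "\<rho> \<in> Delta h a"
  shows "E \<alpha> \<rho> absolutely_integrable_on {0..}"
proof (rule measurable_bounded_by_integrable_imp_absolutely_integrable[OF E_meas[OF \<alpha> \<rho>]])
  show "(\<lambda>t. Lm a * exp (- \<beta> * t)) integrable_on {0..}"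
    using exp_hasint[OF beta_pos, of "Lm a"] by blast
qed (use E_bound[OF \<alpha> \<rho>] in auto)

lemma E_int:
  assumes \<alpha>: "\<alpha> \<in> Ctrl U" and \<rho>: "\<rho> \<in> Delta h a"
  shows "E \<alpha> \<rho> integrable_on {0..}"
    and "(LINT t:{0..}|lebesgue. E \<alpha> \<rho> t) = integral {0..} (E \<alpha> \<rho>)"
  using set_lebesgue_integral_eq_integral[OF E_abs[OF \<alpha> \<rho>]] by auto

lemma J_bound:
  assumes \<alpha>: "\<alpha> \<in> Ctrl U" and \<rho>: "\<rho> \<in> Delta h a"
  shows "\<bar>integral {0..} (E \<alpha> \<rho>)\<bar> \<le> Lm a * (1 / \<beta>)"
proof -
  have "norm (integral {0..} (E \<alpha> \<rho>)) \<le> integral {0..} (\<lambda>t. Lm a * exp (- \<beta> * t))"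
    by (rule integral_norm_bound_integral[OF E_int(1)[OF \<alpha> \<rho>]])
       (use exp_hasint[OF beta_pos, of "Lm a"] E_bound[OF \<alpha> \<rho>] in auto)
  also have "\<dots> = Lm a * (1 / \<beta>)" using exp_hasint[OF beta_pos, of "Lm a"] by (rule integral_unique)
  finally show ?thesis by simp
qed

lemma GG_eq:
  assumes \<rho>: "\<rho> \<in> Delta h a"
  shows "GG h U \<Lambda> f \<beta> nu0 qd w \<rho> = (INF \<alpha>\<in>Ctrl U. integral {0..} (E \<alpha> \<rho>))"
proof -
  have "(LINT t:{0..}|lebesgue. exp (- \<beta> * t) * LL h \<Lambda> f nu0 qd (phi h \<Lambda> \<alpha> \<rho> t) (chi h \<Lambda> \<alpha> \<rho> t) (\<alpha> t) w)
        = integral {0..} (E \<alpha> \<rho>)" if "\<alpha> \<in> Ctrl U" for \<alpha>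
    using E_int(2)[OF that \<rho>] by (simp add: E_def)
  thus ?thesis unfolding GG_def by (intro INF_cong) auto
qed

lemma Ctrl_ne: "Ctrl U \<noteq> {}"
proof -
  obtain u0 where u0: "u0 \<in> U" using U_ne by auto
  have "(\<lambda>t. u0) \<in> Ctrl U" using u0 by (auto simp: Ctrl_def)
  thus ?thesis by auto
qed

end


context sett
begin

lemma J_diff:
  assumes e: "\<epsilon> > 0"
  shows "\<exists>\<delta>>0. \<forall>\<rho>1\<in>Delta h a. \<forall>\<rho>2\<in>Delta h a. norm (\<rho>1 - \<rho>2) < \<delta> \<longrightarrow>
            (\<forall>\<alpha>\<in>Ctrl U. \<bar>integral {0..} (E \<alpha> \<rho>1) - integral {0..} (E \<alpha> \<rho>2)\<bar> \<le> \<epsilon>)"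
proof -
  define L where "L = Lm a"
  have L0: "L \<ge> 0" by (simp add: L_def Lm)
  define \<eta> where "\<eta> = \<epsilon> * \<beta> / 4"
  have \<eta>0: "\<eta> > 0" using e beta_pos by (simp add: \<eta>_def)
  define q where "q = \<epsilon> * \<beta> / (8 * (L + 1))"
  have q0: "q > 0" using e beta_pos L0 by (simp add: q_def)
  define T where "T = (2 / \<beta>) * (1 / q)"
  have T0: "T > 0" using q0 beta_pos by (simp add: T_def)
  have eT: "exp (- (\<beta> / 2) * T) \<le> q"
  proof -
    have "(\<beta> / 2) * T = 1 / q" using beta_pos by (simp add: T_def)
    then have "exp ((\<beta> / 2) * T) \<ge> 1 + 1 / q" using exp_ge_add_one_self[of "1/q"] by simp
    then have "exp ((\<beta> / 2) * T) \<ge> 1 / q" by linarith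
    then have "inverse (exp ((\<beta> / 2) * T)) \<le> inverse (1 / q)"
      using q0 by (intro le_imp_inverse_le) auto
    thus ?thesis by (simp add: exp_minus[symmetric])
  qed
  have tail: "2 * L * exp (- (\<beta> / 2) * T) \<le> \<epsilon> * \<beta> / 4"
  proof -
    have "2 * L * exp (- (\<beta> / 2) * T) \<le> 2 * L * q" using eT L0 by (intro mult_left_mono) auto
    also have "\<dots> = (\<epsilon> * \<beta> / 4) * (L / (L + 1))" using L0 by (simp add: q_def field_simps)
    also have "\<dots> \<le> (\<epsilon> * \<beta> / 4) * 1" using L0 e beta_pos by (intro mult_left_mono) auto
    finally show ?thesis by simp
  qed
  have uc: "uniformly_continuous_on (Dset a) (Phi a)"
    by (rule compact_uniformly_continuous[OF Phi_cont compact_Dset])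
  obtain \<delta>0 where \<delta>0: "\<delta>0 > 0" and
    ucd: "\<And>x x'. x \<in> Dset a \<Longrightarrow> x' \<in> Dset a \<Longrightarrow> dist x' x < \<delta>0 \<Longrightarrow> dist (Phi a x') (Phi a x) < \<eta>"
    using uc \<eta>0 unfolding uniformly_continuous_on_def by metis
  define C where "C = exp (KG * T) + KR * T * exp (KG * T)"
  have C1: "C \<ge> 1"
  proof -
    have "1 \<le> exp (KG * T)" using KG_pos T0 by (simp del: one_le_exp_iff add: one_le_exp_iff)
    moreover have "0 \<le> KR * T * exp (KG * T)" using KR_nonneg T0 by simp
    ultimately show ?thesis unfolding C_def by linarith
  qed
  define \<delta> where "\<delta> = \<delta>0 / C"
  have \<delta>pos: "\<delta> > 0" using \<delta>0 C1 by (simp add: \<delta>_def)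
  show ?thesis
  proof (intro exI[of _ \<delta>] conjI \<delta>pos ballI impI)
    fix \<rho>1 \<rho>2 \<alpha> assume \<rho>1: "\<rho>1 \<in> Delta h a" and \<rho>2: "\<rho>2 \<in> Delta h a"
      and d: "norm (\<rho>1 - \<rho>2) < \<delta>" and \<alpha>: "\<alpha> \<in> Ctrl U"
    define cc where "cc = \<eta> + 2 * L * exp (- (\<beta> / 2) * T)"
    have pw: "norm (E \<alpha> \<rho>1 t - E \<alpha> \<rho>2 t) \<le> cc * exp (- (\<beta> / 2) * t)" if t: "t \<in> {0..}" for t
    proof -
      have t0: "t \<ge> 0" using t by simp
      have Ed: "norm (E \<alpha> \<rho>1 t - E \<alpha> \<rho>2 t) = exp (- \<beta> * t) * \<bar>Phi a (pt \<alpha> \<rho>1 t) - Phi a (pt \<alpha> \<rho>2 t)\<bar>"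
        by (simp add: E_Phi[OF \<alpha> \<rho>1 t0] E_Phi[OF \<alpha> \<rho>2 t0] abs_mult right_diff_distrib[symmetric])
      have split: "exp (- \<beta> * t) = exp (- (\<beta> / 2) * t) * exp (- (\<beta> / 2) * t)"
        by (simp add: exp_add[symmetric])
      have e1: "exp (- (\<beta> / 2) * t) \<le> 1" using t0 beta_pos by simp
      show ?thesis
      proof (cases "t \<le> T")
        case True
        have "dist (pt \<alpha> \<rho>1 t) (pt \<alpha> \<rho>2 t) \<le> norm (phi h \<Lambda> \<alpha> \<rho>1 t - phi h \<Lambda> \<alpha> \<rho>2 t) + \<bar>chi h \<Lambda> \<alpha> \<rho>1 t - chi h \<Lambda> \<alpha> \<rho>2 t\<bar>"
          unfolding pt_def by (rule dist_triple_le)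
        also have "\<dots> \<le> norm (\<rho>1 - \<rho>2) * exp (KG * t) + KR * t * (norm (\<rho>1 - \<rho>2) * exp (KG * t))"
          by (intro add_mono phi_dep[OF \<alpha> \<rho>1 \<rho>2 t0] chi_dep[OF \<alpha> \<rho>1 \<rho>2 t0])
        also have "\<dots> \<le> norm (\<rho>1 - \<rho>2) * C"
        proof -
          have x1: "exp (KG * t) \<le> exp (KG * T)" using True KG_pos by (simp add: mult_left_mono)
          have x2: "KR * t \<le> KR * T" using True KR_nonneg by (simp add: mult_left_mono)
          have "KR * t * (norm (\<rho>1 - \<rho>2) * exp (KG * t)) \<le> KR * T * (norm (\<rho>1 - \<rho>2) * exp (KG * T))"
            using x1 x2 KR_nonneg t0 True T0 by (intro mult_mono) auto
          moreover have "norm (\<rho>1 - \<rho>2) * exp (KG * t) \<le> norm (\<rho>1 - \<rho>2) * exp (KG * T)"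
            using x1 by (intro mult_left_mono) auto
          ultimately show ?thesis by (simp add: C_def algebra_simps)
        qed
        also have "\<dots> < \<delta> * C" using d C1 by (intro mult_strict_right_mono) auto
        also have "\<dots> = \<delta>0" using C1 by (simp add: \<delta>_def)
        finally have "dist (pt \<alpha> \<rho>1 t) (pt \<alpha> \<rho>2 t) < \<delta>0" .
        then have "dist (Phi a (pt \<alpha> \<rho>1 t)) (Phi a (pt \<alpha> \<rho>2 t)) < \<eta>"
          by (intro ucd pt_in[OF \<alpha> \<rho>1 t0] pt_in[OF \<alpha> \<rho>2 t0])
        then have P: "\<bar>Phi a (pt \<alpha> \<rho>1 t) - Phi a (pt \<alpha> \<rho>2 t)\<bar> \<le> \<eta>" by (simp add: dist_real_def)
        have "norm (E \<alpha> \<rho>1 t - E \<alpha> \<rho>2 t) \<le> exp (- \<beta> * t) * \<eta>"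
          unfolding Ed by (intro mult_left_mono P) auto
        also have "\<dots> \<le> exp (- (\<beta> / 2) * t) * \<eta>"
          unfolding split using e1 \<eta>0 by (intro mult_right_mono) (auto simp: mult_le_cancel_left1)
        also have "\<dots> \<le> exp (- (\<beta> / 2) * t) * cc"
          using L0 by (intro mult_left_mono) (auto simp: cc_def)
        finally show ?thesis by (simp add: mult.commute)
      next
        case False
        have P: "\<bar>Phi a (pt \<alpha> \<rho>1 t) - Phi a (pt \<alpha> \<rho>2 t)\<bar> \<le> 2 * L"
          using Lm(2)[OF pt_in[OF \<alpha> \<rho>1 t0]] Lm(2)[OF pt_in[OF \<alpha> \<rho>2 t0]] by (simp add: L_def)
        have eTt: "exp (- (\<beta> / 2) * t) \<le> exp (- (\<beta> / 2) * T)" using False beta_pos by simp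
        have "norm (E \<alpha> \<rho>1 t - E \<alpha> \<rho>2 t) \<le> exp (- \<beta> * t) * (2 * L)"
          unfolding Ed by (intro mult_left_mono P) auto
        also have "\<dots> = exp (- (\<beta> / 2) * t) * (exp (- (\<beta> / 2) * t) * (2 * L))"
          unfolding split by simp
        also have "\<dots> \<le> exp (- (\<beta> / 2) * t) * (exp (- (\<beta> / 2) * T) * (2 * L))"
          using eTt L0 by (intro mult_left_mono mult_right_mono) auto
        also have "\<dots> \<le> exp (- (\<beta> / 2) * t) * cc"
          using \<eta>0 by (intro mult_left_mono) (auto simp: cc_def)
        finally show ?thesis by (simp add: mult.commute)
      qed
    qed
    have b2: "\<beta> / 2 > 0" using beta_pos by simp
    have "\<bar>integral {0..} (E \<alpha> \<rho>1) - integral {0..} (E \<alpha> \<rho>2)\<bar> = norm (integral {0..} (\<lambda>t. E \<alpha> \<rho>1 t - E \<alpha> \<rho>2 t))"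
      using integral_diff[OF E_int(1)[OF \<alpha> \<rho>1] E_int(1)[OF \<alpha> \<rho>2]] by simp
    also have "\<dots> \<le> integral {0..} (\<lambda>t. cc * exp (- (\<beta> / 2) * t))"
      by (rule integral_norm_bound_integral[OF integrable_diff[OF E_int(1)[OF \<alpha> \<rho>1] E_int(1)[OF \<alpha> \<rho>2]]])
         (use exp_hasint[OF b2, of cc] pw in auto)
    also have "\<dots> = cc * (1 / (\<beta> / 2))" using exp_hasint[OF b2, of cc] by (rule integral_unique)
    also have "\<dots> \<le> \<epsilon>"
    proof -
      have "cc \<le> \<epsilon> * \<beta> / 2" unfolding cc_def \<eta>_def using tail by linarith
      then have "cc * (2 / \<beta>) \<le> (\<epsilon> * \<beta> / 2) * (2 / \<beta>)" using beta_pos by (intro mult_right_mono) auto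
      thus ?thesis using beta_pos by simp
    qed
    finally show "\<bar>integral {0..} (E \<alpha> \<rho>1) - integral {0..} (E \<alpha> \<rho>2)\<bar> \<le> \<epsilon>" .
  qed
qed

lemma GG_cont_block: "continuous_on (Delta h a) (GG h U \<Lambda> f \<beta> nu0 qd w)"
  unfolding continuous_on_iff
proof (intro ballI allI impI)
  fix x e assume x: "x \<in> Delta h a" and e: "(e::real) > 0"
  obtain \<delta> where \<delta>: "\<delta> > 0" and
    J: "\<And>\<rho>1 \<rho>2 \<alpha>. \<rho>1 \<in> Delta h a \<Longrightarrow> \<rho>2 \<in> Delta h a \<Longrightarrow> norm (\<rho>1 - \<rho>2) < \<delta> \<Longrightarrow> \<alpha> \<in> Ctrl U \<Longrightarrow>
        \<bar>integral {0..} (E \<alpha> \<rho>1) - integral {0..} (E \<alpha> \<rho>2)\<bar> \<le> e / 2"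
    using J_diff[of "e/2" a] e by auto
  show "\<exists>d>0. \<forall>x'\<in>Delta h a. dist x' x < d \<longrightarrow> dist (GG h U \<Lambda> f \<beta> nu0 qd w x') (GG h U \<Lambda> f \<beta> nu0 qd w x) < e"
  proof (intro exI[of _ \<delta>] conjI \<delta> ballI impI)
    fix x' assume x': "x' \<in> Delta h a" and dx: "dist x' x < \<delta>"
    have bdd: "bdd_below ((\<lambda>\<alpha>. integral {0..} (E \<alpha> \<rho>)) ` Ctrl U)" if "\<rho> \<in> Delta h a" for \<rho>
    proof (rule bdd_belowI[of _ "- (Lm a * (1 / \<beta>))"])
      fix y assume "y \<in> (\<lambda>\<alpha>. integral {0..} (E \<alpha> \<rho>)) ` Ctrl U"
      then obtain \<alpha> where \<alpha>: "\<alpha> \<in> Ctrl U" and y: "y = integral {0..} (E \<alpha> \<rho>)" by auto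
      have "\<bar>integral {0..} (E \<alpha> \<rho>)\<bar> \<le> Lm a * (1 / \<beta>)" by (rule J_bound[OF \<alpha> that])
      thus "- (Lm a * (1 / \<beta>)) \<le> y" unfolding y by linarith
    qed
    have "\<bar>(INF \<alpha>\<in>Ctrl U. integral {0..} (E \<alpha> x')) - (INF \<alpha>\<in>Ctrl U. integral {0..} (E \<alpha> x))\<bar> \<le> e / 2"
      by (rule INF_close[OF Ctrl_ne]) (use J[OF x' x] dx bdd[OF x'] bdd[OF x] in \<open>auto simp: dist_norm\<close>)
    thus "dist (GG h U \<Lambda> f \<beta> nu0 qd w x') (GG h U \<Lambda> f \<beta> nu0 qd w x) < e"
      using e by (simp add: GG_eq[OF x] GG_eq[OF x'] dist_real_def)
  qed
qed

lemma GG_cont: "continuous_on (Delta_e h) (GG h U \<Lambda> f \<beta> nu0 qd w)"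
proof -
  have "continuous_on (\<Union>a\<in>UNIV. Delta h a) (GG h U \<Lambda> f \<beta> nu0 qd w)"
    by (rule continuous_on_closed_Union) (auto intro: closed_Delta GG_cont_block)
  thus ?thesis by (simp add: Delta_e_def)
qed

end
theorem mainTheorem11:
  fixes h :: "'i::finite \<Rightarrow> 'o::finite"
    and U :: "'u::metric_space set"
    and \<Lambda> :: "'u \<Rightarrow> real^'i^'i"
    and f :: "'i \<Rightarrow> 'u \<Rightarrow> real"
    and \<beta> :: real
    and nu0 :: "'o \<Rightarrow> real^'i"
    and qd :: "'o \<Rightarrow> 'o \<Rightarrow> real"
    and w :: "real^'i \<Rightarrow> real"
  assumes h_surj: "surj h"
    and h_nonconst: "\<exists>i j. h i \<noteq> h j"
    and U_compact: "compact U"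
    and Lambda_offdiag: "\<forall>u\<in>U. \<forall>i j. i \<noteq> j \<longrightarrow> 0 \<le> \<Lambda> u $ i $ j"
    and Lambda_rows: "\<forall>u\<in>U. \<forall>i. (\<Sum>j\<in>UNIV. \<Lambda> u $ i $ j) = 0"
    and beta_pos: "\<beta> > 0"
    and nu0_in: "\<forall>b. nu0 b \<in> Delta h b"
    and qd_prob: "\<forall>a. (\<forall>b. 0 \<le> qd a b) \<and> qd a a = 0 \<and> (\<Sum>b\<in>UNIV. qd a b) = 1"
    and Lambda_cont: "\<forall>i j. continuous_on U (\<lambda>u. \<Lambda> u $ i $ j)"
    and f_cont: "\<forall>i. continuous_on U (f i)"
    and w_cont: "continuous_on (Delta_e h) w"
  shows "continuous_on (Delta_e h) (GG h U \<Lambda> f \<beta> nu0 qd w)"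
proof (cases "U = {}")
  case True
  have C: "Ctrl U = {}"
  proof -
    have "\<alpha> \<notin> Ctrl U" for \<alpha> using True by (auto simp: Ctrl_def)
    thus ?thesis by auto
  qed
  have "GG h U \<Lambda> f \<beta> nu0 qd w = (\<lambda>\<nu>. Inf {})" by (simp add: GG_def C fun_eq_iff)
  thus ?thesis by simp
next
  case False
  interpret sett h U \<Lambda> f \<beta> nu0 qd w
    by unfold_locales (use assms False in auto)
  show ?thesis by (rule GG_cont)
qed

end
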